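(* Let $T\subseteq\mathbb{R}^k$ and let $f : U \to \mathbb{R}$, where $U \subseteq T \times (0,1)^m$ and for each $t \in T$ the fibre $U_t=\{x\mid (t,x)\in U\}$ is an open subset of $(0,1)^m$, be prepared in $x$: $f(t,x) = b_j(t,x) F(b(t,x))$, where $b : U \to \mathbb{R}^N$ is a bounded monomial map, $b_j$ is one of its component functions, and $F$ is analytic and non-vanishing on an open neighbourhood of the closure of $\operatorname{im}(b)$. Then there exist $A_f, B_f > 0$ such that for all $\nu \in \mathbb{N}^m$, $t \in T$ and $x \in U_t$, \[ \left| f_t^{(\nu)}(x) \right| \leq x^{-\nu}\, |b_{t,j}(x)|\, B_f A_f^{|\nu|}\, |\nu|!. \]
   Context: A set or function is power-subanalytic if definable in an o-minimal structure $\mathbb{R}^K_{\mathcal{F}}$ ($\mathcal{F}$ a Weierstrass system, $K$ a subfield of its field of exponents). A function $b : U \subseteq T \times (0,1)^m \to \mathbb{R}$ is a bounded monomial map if it has bounded range and $b(t,x) = a(t) x^{\mu}$ for some power-subanalytic function $a$ and some $\mu \in \mathbb{R}^m$; a map into $\mathbb{R}^N$ is bounded monomial if each component is. Notation: $f_t(x)=f(t,x)$, $b_{t,j}(x)=b_j(t,x)$; $f_t^{(\nu)}$ is the partial derivative in $x$ of multi-order $\nu$, $|\nu|=\nu_1+\dots+\nu_m$, $\nu! = \nu_1!\cdots\nu_m!$, and $x^{-\nu} = x_1^{-\nu_1}\cdots x_m^{-\nu_m}$. *)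

theory Defs
  imports "HOL-Analysis.Analysis"
begin

definition real_analytic_on :: "(real^'n \<Rightarrow> real) \<Rightarrow> (real^'n) set \<Rightarrow> bool" where
  "real_analytic_on F W \<longleftrightarrow>
     (\<forall>y\<in>W. \<exists>r>0. \<exists>c :: ('n \<Rightarrow> nat) \<Rightarrow> real.
        \<forall>z\<in>ball y r. ((\<lambda>\<alpha>. c \<alpha> * (\<Prod>i\<in>UNIV. (z$i - y$i) ^ \<alpha> i)) has_sum F z) UNIV)"

definition monom_pow :: "real^'m \<Rightarrow> real^'m \<Rightarrow> real" where
  "monom_pow x \<mu> = (\<Prod>l\<in>UNIV. (x$l) powr (\<mu>$l))"

text \<open>Bounded monomial map on U (definability of the coefficients is not recorded).\<close>
definition bounded_monomial_map ::
  "((real^'k) \<times> (real^'m)) set \<Rightarrow> (real^'k \<Rightarrow> real^'m \<Rightarrow> real^'n) \<Rightarrow> bool" where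
  "bounded_monomial_map U b \<longleftrightarrow>
     bounded ((\<lambda>(t,x). b t x) ` U) \<and>
     (\<forall>i. \<exists>(a :: real^'k \<Rightarrow> real) (\<mu> :: real^'m).
        \<forall>(t,x)\<in>U. b t x $ i = a t * monom_pow x \<mu>)"

definition partial_deriv :: "'m \<Rightarrow> (real^'m \<Rightarrow> real) \<Rightarrow> real^'m \<Rightarrow> real" where
  "partial_deriv i g x = deriv (\<lambda>s. g (x + s *\<^sub>R axis i 1)) 0"

text \<open>Iterated partial derivative along a list of coordinate directions; the list L
realises the multi-index nu with nu i = count_list L i and |nu| = length L.\<close>
fun iter_partial :: "'m list \<Rightarrow> (real^'m \<Rightarrow> real) \<Rightarrow> real^'m \<Rightarrow> real" where
  "iter_partial [] g = g"
| "iter_partial (i # is) g = partial_deriv i (iter_partial is g)"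

end

theory Submission
  imports Defs
begin


definition mon :: "real^'m \<Rightarrow> ('m \<Rightarrow> nat) \<Rightarrow> real^'m \<Rightarrow> real" where
  "mon c \<alpha> x = (\<Prod>l\<in>UNIV. (x$l - c$l) ^ \<alpha> l)"

definition pw :: "real^'m \<Rightarrow> ('m \<Rightarrow> nat) \<Rightarrow> real" where
  "pw R \<alpha> = (\<Prod>l\<in>UNIV. (R$l) ^ \<alpha> l)"

definition inpoly :: "real^'m \<Rightarrow> real^'m \<Rightarrow> real^'m \<Rightarrow> bool" where
  "inpoly c R x \<longleftrightarrow> (\<forall>l. \<bar>x$l - c$l\<bar> < R$l)"

definition okc :: "real^'m \<Rightarrow> (('m \<Rightarrow> nat) \<Rightarrow> real) \<Rightarrow> bool" where
  "okc R d \<longleftrightarrow> (\<lambda>\<alpha>. \<bar>d \<alpha>\<bar> * pw R \<alpha>) summable_on UNIV"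

definition nrm :: "real^'m \<Rightarrow> (('m \<Rightarrow> nat) \<Rightarrow> real) \<Rightarrow> real" where
  "nrm R d = infsum (\<lambda>\<alpha>. \<bar>d \<alpha>\<bar> * pw R \<alpha>) UNIV"

definition rep :: "real^'m \<Rightarrow> real^'m \<Rightarrow> (real^'m \<Rightarrow> real) \<Rightarrow> real \<Rightarrow> bool" where
  "rep c R f M \<longleftrightarrow> (\<forall>l. 0 < R$l) \<and> (\<exists>d. okc R d \<and> nrm R d \<le> M \<and>
      (\<forall>x. inpoly c R x \<longrightarrow> ((\<lambda>\<alpha>. d \<alpha> * mon c \<alpha> x) has_sum f x) UNIV))"

lemma pw_nonneg: "(\<And>l. R$l \<ge> 0) \<Longrightarrow> pw R \<alpha> \<ge> 0"
  unfolding pw_def by (intro prod_nonneg) auto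

lemma abs_mono_le: "inpoly c R x \<Longrightarrow> \<bar>mon c \<alpha> x\<bar> \<le> pw R \<alpha>"
  unfolding mon_def pw_def abs_prod
proof (intro prod_mono conjI)
  fix l assume "inpoly c R x"
  then have "\<bar>x$l - c$l\<bar> \<le> R$l" unfolding inpoly_def by (simp add: less_imp_le)
  then show "\<bar>(x$l - c$l) ^ \<alpha> l\<bar> \<le> R$l ^ \<alpha> l" unfolding power_abs
    by (intro power_mono) auto
qed auto

lemma inpoly_R_nonneg: "inpoly c R x \<Longrightarrow> R$l \<ge> 0"
  unfolding inpoly_def by (meson abs_ge_zero le_less_trans less_imp_le)

lemma nrm_nonneg: "nrm R d \<ge> 0" if "\<And>l. R$l \<ge> 0"
  unfolding nrm_def by (intro infsum_nonneg mult_nonneg_nonneg pw_nonneg that) auto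

lemma okc_eval_summable:
  assumes "okc R d" "inpoly c R x"
  shows "(\<lambda>\<alpha>. d \<alpha> * mon c \<alpha> x) summable_on UNIV"
proof -
  have "(\<lambda>\<alpha>. \<bar>d \<alpha> * mon c \<alpha> x\<bar>) summable_on UNIV"
  proof (rule summable_on_comparison_test)
    show "(\<lambda>\<alpha>. \<bar>d \<alpha>\<bar> * pw R \<alpha>) summable_on UNIV"
      using assms(1) unfolding okc_def .
    fix \<alpha>
    have "\<bar>d \<alpha> * mon c \<alpha> x\<bar> \<le> \<bar>d \<alpha>\<bar> * pw R \<alpha>"
      unfolding abs_mult by (intro mult_left_mono abs_mono_le assms) auto
    then show "\<bar>d \<alpha> * mon c \<alpha> x\<bar> \<le> \<bar>d \<alpha>\<bar> * pw R \<alpha>" by simp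
  qed auto
  then have "(\<lambda>\<alpha>. norm (d \<alpha> * mon c \<alpha> x)) summable_on UNIV" by simp
  then show ?thesis by (rule abs_summable_summable)
qed

lemma has_sum_abs_bound:
  fixes f g :: "'a \<Rightarrow> real"
  assumes "(f has_sum a) A" "(g has_sum b) A" "\<And>x. x \<in> A \<Longrightarrow> \<bar>f x\<bar> \<le> g x"
  shows "\<bar>a\<bar> \<le> b"
proof -
  have 1: "a \<le> b" by (rule has_sum_mono[OF assms(1,2)]) (use assms(3) in force)
  have m: "((\<lambda>x. - f x) has_sum (-a)) A" using assms(1) by (simp add: has_sum_uminus)
  have "-a \<le> b" by (rule has_sum_mono[OF m assms(2)])
      (use assms(3) in force)
  with 1 show ?thesis by linarith
qed

lemma rep_eval_bound:
  assumes "rep c R f M" "inpoly c R x"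
  shows "\<bar>f x\<bar> \<le> M"
proof -
  obtain d where d: "okc R d" "nrm R d \<le> M" "\<And>x. inpoly c R x \<Longrightarrow> ((\<lambda>\<alpha>. d \<alpha> * mon c \<alpha> x) has_sum f x) UNIV"
    using assms(1) unfolding rep_def by blast
  have "\<bar>f x\<bar> \<le> nrm R d"
  proof (rule has_sum_abs_bound[OF d(3)[OF assms(2)]])
    show "((\<lambda>\<alpha>. \<bar>d \<alpha>\<bar> * pw R \<alpha>) has_sum nrm R d) UNIV"
      using d(1) unfolding okc_def nrm_def by (simp add: has_sum_infsum)
    show "\<bar>d \<alpha> * mon c \<alpha> x\<bar> \<le> \<bar>d \<alpha>\<bar> * pw R \<alpha>" for \<alpha>
      unfolding abs_mult by (intro mult_left_mono abs_mono_le assms(2)) auto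
  qed
  with d(2) show ?thesis by linarith
qed

lemma rep_mono: "rep c R f M \<Longrightarrow> M \<le> M' \<Longrightarrow> rep c R f M'"
  unfolding rep_def by force

lemma rep_cong: "rep c R f M \<Longrightarrow> (\<And>x. inpoly c R x \<Longrightarrow> f x = g x) \<Longrightarrow> rep c R g M"
  unfolding rep_def by force

lemma rep_scale:
  assumes "rep c R f M"
  shows "rep c R (\<lambda>x. a * f x) (\<bar>a\<bar> * M)"
proof -
  obtain d where d: "okc R d" "nrm R d \<le> M" "\<And>x. inpoly c R x \<Longrightarrow> ((\<lambda>\<alpha>. d \<alpha> * mon c \<alpha> x) has_sum f x) UNIV"
    using assms(1) unfolding rep_def by blast
  have ok: "okc R (\<lambda>\<alpha>. a * d \<alpha>)"
    using summable_on_cmult_right[OF d(1)[unfolded okc_def], of "\<bar>a\<bar>"]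
    unfolding okc_def by (simp add: abs_mult mult.assoc)
  have "nrm R (\<lambda>\<alpha>. a * d \<alpha>) = \<bar>a\<bar> * nrm R d"
    unfolding nrm_def abs_mult mult.assoc by (rule infsum_cmult_right') 
  also have "\<dots> \<le> \<bar>a\<bar> * M" using d(2) by (simp add: mult_left_mono)
  finally have n: "nrm R (\<lambda>\<alpha>. a * d \<alpha>) \<le> \<bar>a\<bar> * M" .
  have "\<forall>l. 0 < R$l" using assms unfolding rep_def by blast
  then show ?thesis using ok n has_sum_cmult_right[OF d(3), of _ a] unfolding rep_def
    by (auto simp: mult.assoc intro!: exI[of _ "\<lambda>\<alpha>. a * d \<alpha>"])
qed

lemma mono_zero[simp]: "mon c (\<lambda>_. 0) x = 1"
  unfolding mon_def by simp

lemma pw_zero[simp]: "pw R (\<lambda>_. 0) = 1"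
  unfolding pw_def by simp

lemma mono_center: "mon c \<alpha> c = (if \<alpha> = (\<lambda>_. 0) then 1 else 0)"
proof (cases "\<alpha> = (\<lambda>_. 0)")
  case False
  then obtain l where "\<alpha> l \<noteq> 0" by auto
  then show ?thesis unfolding mon_def using False
    by (intro trans[OF prod_zero]) (auto intro!: bexI[of _ l])
qed simp

lemma rep_const: "(\<And>l. 0 < R$l) \<Longrightarrow> rep c R (\<lambda>x. a) \<bar>a\<bar>"
proof -
  define d where "d = (\<lambda>\<alpha>::'a\<Rightarrow>nat. if \<alpha> = (\<lambda>_. 0) then a else 0)"
  have 1: "((\<lambda>\<alpha>. \<bar>d \<alpha>\<bar> * pw R \<alpha>) has_sum \<bar>a\<bar>) UNIV"
    by (rule has_sum_cong_neutral[where S="{\<lambda>_. 0}", THEN iffD1]) (auto simp: d_def intro!: has_sum_finiteI)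
  have 2: "((\<lambda>\<alpha>. d \<alpha> * mon c \<alpha> x) has_sum a) UNIV" for x
    by (rule has_sum_cong_neutral[where S="{\<lambda>_. 0}", THEN iffD1]) (auto simp: d_def intro!: has_sum_finiteI)
  assume "\<And>l. 0 < R$l" then
  show ?thesis unfolding rep_def okc_def nrm_def
    using 1 2 by (auto intro!: exI[of _ d] simp: has_sum_infsum infsumI summable_on_def)
qed



lemma has_sum_diff:
  fixes f g :: "'a \<Rightarrow> real"
  assumes "(f has_sum a) A" "(g has_sum b) A"
  shows "((\<lambda>x. f x - g x) has_sum (a - b)) A"
proof -
  have "((\<lambda>x. - g x) has_sum (- b)) A" using assms(2) by (simp add: has_sum_uminus)
  from has_sum_add[OF assms(1) this] show ?thesis by simp
qed

lemma repE:
  assumes "rep c R f M"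
  obtains d where "\<And>l. 0 < R$l" "okc R d" "nrm R d \<le> M"
    "\<And>x. inpoly c R x \<Longrightarrow> ((\<lambda>\<alpha>. d \<alpha> * mon c \<alpha> x) has_sum f x) UNIV"
  using assms unfolding rep_def by blast

lemma repI:
  assumes "\<And>l. 0 < R$l" "okc R d" "nrm R d \<le> M"
    "\<And>x. inpoly c R x \<Longrightarrow> ((\<lambda>\<alpha>. d \<alpha> * mon c \<alpha> x) has_sum f x) UNIV"
  shows "rep c R f M"
  using assms unfolding rep_def by blast

lemma okc_has_sum: "okc R d \<Longrightarrow> ((\<lambda>\<alpha>. \<bar>d \<alpha>\<bar> * pw R \<alpha>) has_sum nrm R d) UNIV"
  unfolding okc_def nrm_def by (simp add: has_sum_infsum)

lemma pw_pos: "(\<And>l. 0 < R$l) \<Longrightarrow> pw R \<alpha> > 0"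
  unfolding pw_def by (intro prod_pos) auto

lemma rep_add:
  assumes "rep c R f M" "rep c R g N"
  shows "rep c R (\<lambda>x. f x + g x) (M + N)"
proof -
  obtain d where d: "\<And>l. 0 < R$l" "okc R d" "nrm R d \<le> M" "\<And>x. inpoly c R x \<Longrightarrow> ((\<lambda>\<alpha>. d \<alpha> * mon c \<alpha> x) has_sum f x) UNIV"
    by (rule repE[OF assms(1)]) auto
  obtain e where e: "okc R e" "nrm R e \<le> N" "\<And>x. inpoly c R x \<Longrightarrow> ((\<lambda>\<alpha>. e \<alpha> * mon c \<alpha> x) has_sum g x) UNIV"
    by (rule repE[OF assms(2)]) auto
  have pw: "pw R \<alpha> > 0" for \<alpha> using pw_pos d(1) by blast
  have hs: "((\<lambda>\<alpha>. \<bar>d \<alpha>\<bar> * pw R \<alpha> + \<bar>e \<alpha>\<bar> * pw R \<alpha>) has_sum (nrm R d + nrm R e)) UNIV"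
    by (intro has_sum_add okc_has_sum d e)
  have le: "\<bar>d \<alpha> + e \<alpha>\<bar> * pw R \<alpha> \<le> \<bar>d \<alpha>\<bar> * pw R \<alpha> + \<bar>e \<alpha>\<bar> * pw R \<alpha>" for \<alpha>
    using pw[of \<alpha>] by (metis abs_triangle_ineq distrib_right less_imp_le mult_right_mono)
  have ok: "okc R (\<lambda>\<alpha>. d \<alpha> + e \<alpha>)"
    unfolding okc_def
    by (rule summable_on_comparison_test[OF has_sum_imp_summable[OF hs] le])
       (simp add: less_imp_le pw)
  have "nrm R (\<lambda>\<alpha>. d \<alpha> + e \<alpha>) \<le> nrm R d + nrm R e"
    using has_sum_mono[OF okc_has_sum[OF ok] hs le] by simp
  then have n: "nrm R (\<lambda>\<alpha>. d \<alpha> + e \<alpha>) \<le> M + N" using d(3) e(2) by linarith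
  show ?thesis
    by (rule repI[OF d(1) ok n]) (auto simp: distrib_right intro!: has_sum_add d(4) e(3))
qed

lemma rep_center:
  assumes "rep c R f M"
  shows "rep c R (\<lambda>x. f x - f c) (M - \<bar>f c\<bar>)"
proof -
  obtain d where d: "\<And>l. 0 < R$l" "okc R d" "nrm R d \<le> M" "\<And>x. inpoly c R x \<Longrightarrow> ((\<lambda>\<alpha>. d \<alpha> * mon c \<alpha> x) has_sum f x) UNIV"
    by (rule repE[OF assms(1)]) auto
  let ?z = "(\<lambda>_. 0) :: 'a \<Rightarrow> nat"
  have cin: "inpoly c R c" unfolding inpoly_def using d(1) by simp
  have "((\<lambda>\<alpha>. d \<alpha> * mon c \<alpha> c) has_sum d ?z) UNIV"
    by (rule has_sum_cong_neutral[where S="{?z}", THEN iffD1])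
       (auto simp: mono_center intro!: has_sum_finiteI)
  then have fc: "f c = d ?z" using d(4)[OF cin] has_sum_unique by blast
  define d' where "d' = d(?z := 0)"
  have delta: "((\<lambda>\<alpha>. if \<alpha> = ?z then v else 0) has_sum v) UNIV" for v :: real
    by (rule has_sum_cong_neutral[where S="{?z}", THEN iffD1]) (auto intro!: has_sum_finiteI)
  have hs: "((\<lambda>\<alpha>. \<bar>d' \<alpha>\<bar> * pw R \<alpha>) has_sum (nrm R d - \<bar>d ?z\<bar>)) UNIV"
  proof -
    have "((\<lambda>\<alpha>. \<bar>d \<alpha>\<bar> * pw R \<alpha> - (if \<alpha> = ?z then \<bar>d ?z\<bar> else 0)) has_sum (nrm R d - \<bar>d ?z\<bar>)) UNIV"
      by (intro has_sum_diff okc_has_sum d delta)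
    then show ?thesis by (rule has_sum_cong[THEN iffD1, rotated]) (auto simp: d'_def)
  qed
  show ?thesis
  proof (rule repI[OF d(1)])
    show ok: "okc R d'" unfolding okc_def using hs has_sum_imp_summable by blast
    show "nrm R d' \<le> M - \<bar>f c\<bar>" using has_sum_unique[OF hs okc_has_sum[OF ok]] d(3) fc by simp
    fix x assume x: "inpoly c R x"
    have "((\<lambda>\<alpha>. d \<alpha> * mon c \<alpha> x - (if \<alpha> = ?z then d ?z else 0)) has_sum (f x - f c)) UNIV"
      unfolding fc by (intro has_sum_diff d(4) x delta)
    then show "((\<lambda>\<alpha>. d' \<alpha> * mon c \<alpha> x) has_sum f x - f c) UNIV"
      by (rule has_sum_cong[THEN iffD1, rotated]) (auto simp: d'_def)
  qed
qed

definition fib :: "('m \<Rightarrow> nat) \<Rightarrow> (('m \<Rightarrow> nat) \<times> ('m \<Rightarrow> nat)) set" where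
  "fib \<gamma> = {(\<alpha>, \<beta>). \<forall>l. \<alpha> l + \<beta> l = \<gamma> l}"

lemma finite_le_funs: "finite {\<alpha> :: 'm::finite \<Rightarrow> nat. \<forall>l. \<alpha> l \<le> \<gamma> l}"
proof -
  have "{\<alpha> :: 'm \<Rightarrow> nat. \<forall>l. \<alpha> l \<le> \<gamma> l} = PiE UNIV (\<lambda>l. {..\<gamma> l})"
    by (auto simp: PiE_def Pi_def extensional_def)
  then show ?thesis by (simp add: finite_PiE)
qed

lemma finite_fib: "finite (fib (\<gamma> :: 'm::finite \<Rightarrow> nat))"
proof -
  have "fib \<gamma> \<subseteq> {\<alpha>. \<forall>l. \<alpha> l \<le> \<gamma> l} \<times> {\<alpha>. \<forall>l. \<alpha> l \<le> \<gamma> l}"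
    unfolding fib_def by auto (metis le_add1, metis le_add2)
  then show ?thesis by (rule finite_subset) (auto intro: finite_cartesian_product finite_le_funs)
qed

lemma regroup:
  fixes G :: "('m::finite \<Rightarrow> nat) \<times> ('m \<Rightarrow> nat) \<Rightarrow> real"
  assumes "(G has_sum S) UNIV"
  shows "((\<lambda>\<gamma>. \<Sum>p\<in>fib \<gamma>. G p) has_sum S) UNIV"
proof -
  define h where "h = (\<lambda>p :: ('m \<Rightarrow> nat) \<times> ('m \<Rightarrow> nat). ((\<lambda>l. fst p l + snd p l), p))"
  have inj: "inj_on h UNIV" unfolding h_def by (auto intro: inj_onI)
  have img: "h ` UNIV = Sigma UNIV fib"
    unfolding h_def fib_def by (auto simp: image_iff)
  have "((G \<circ> snd) has_sum S) (h ` UNIV)"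
    using has_sum_reindex[OF inj, of "G \<circ> snd" S] assms by (simp add: h_def o_def)
  then have "((G \<circ> snd) has_sum S) (Sigma UNIV fib)" by (simp add: img)
  then show ?thesis
    by (rule has_sum_Sigma') (auto intro!: has_sum_finiteI finite_fib)
qed

lemma prod_has_sum:
  fixes f :: "'a \<Rightarrow> real" and g :: "'b \<Rightarrow> real"
  assumes f: "(f has_sum a) A" "(\<lambda>x. \<bar>f x\<bar>) summable_on A"
    and g: "(g has_sum b) B" "(\<lambda>y. \<bar>g y\<bar>) summable_on B"
  shows "((\<lambda>(x,y). f x * g y) has_sum (a * b)) (A \<times> B)"
proof -
  have J: "(\<lambda>(x,y). \<bar>f x\<bar> * \<bar>g y\<bar>) summable_on (A \<times> B)"
  proof -
    have "(\<lambda>p. \<bar>f (fst p)\<bar> * \<bar>g (snd p)\<bar>) summable_on Sigma A (\<lambda>_. B)"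
    proof (rule summable_on_SigmaI)
      show "((\<lambda>y. \<bar>f (fst (x,y))\<bar> * \<bar>g (snd (x,y))\<bar>) has_sum \<bar>f x\<bar> * infsum (\<lambda>y. \<bar>g y\<bar>) B) B" for x
        using has_sum_cmult_right[OF has_sum_infsum[OF g(2)], of "\<bar>f x\<bar>"] by simp
      show "(\<lambda>x. \<bar>f x\<bar> * infsum (\<lambda>y. \<bar>g y\<bar>) B) summable_on A"
        using summable_on_cmult_left[OF f(2)] by blast
    qed auto
    then show ?thesis by (simp add: case_prod_unfold)
  qed
  have S: "(\<lambda>(x,y). f x * g y) summable_on (A \<times> B)"
  proof -
    have "(\<lambda>p. norm ((\<lambda>(x,y). f x * g y) p)) summable_on (A \<times> B)"
      using J by (simp add: case_prod_unfold abs_mult)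
    then show ?thesis by (rule abs_summable_summable)
  qed
  have "((\<lambda>p. (\<lambda>(x,y). f x * g y) p) has_sum (a * b)) (Sigma A (\<lambda>_. B))"
  proof (rule has_sum_SigmaI)
    show "((\<lambda>y. (\<lambda>(x,y). f x * g y) (x, y)) has_sum f x * b) B" for x
      using has_sum_cmult_right[OF g(1), of "f x"] by simp
    show "((\<lambda>x. f x * b) has_sum a * b) A" using has_sum_cmult_left[OF f(1)] .
    show "(\<lambda>(x,y). f x * g y) summable_on Sigma A (\<lambda>_. B)" using S by simp
  qed
  then show ?thesis by simp
qed

lemma pw_fib: "p \<in> fib \<gamma> \<Longrightarrow> pw R (fst p) * pw R (snd p) = pw R \<gamma>"
  unfolding pw_def fib_def by (auto simp: prod.distrib[symmetric] power_add[symmetric])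

lemma mon_fib: "p \<in> fib \<gamma> \<Longrightarrow> mon c (fst p) x * mon c (snd p) x = mon c \<gamma> x"
  unfolding mon_def fib_def by (auto simp: prod.distrib[symmetric] power_add[symmetric])



lemma okc_eval_abs:
  assumes "okc R d" "inpoly c R x"
  shows "(\<lambda>\<alpha>. \<bar>d \<alpha> * mon c \<alpha> x\<bar>) summable_on UNIV"
proof (rule summable_on_comparison_test)
  show "(\<lambda>\<alpha>. \<bar>d \<alpha>\<bar> * pw R \<alpha>) summable_on UNIV" using assms(1) unfolding okc_def .
  fix \<alpha>
  show "\<bar>d \<alpha> * mon c \<alpha> x\<bar> \<le> \<bar>d \<alpha>\<bar> * pw R \<alpha>"
    unfolding abs_mult by (intro mult_left_mono abs_mono_le assms) auto
qed auto

lemma nrm_nonneg': "okc R d \<Longrightarrow> (\<And>l. 0 < R$l) \<Longrightarrow> nrm R d \<ge> 0"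
  using nrm_nonneg[of R d] by (simp add: less_imp_le)

lemma rep_mult:
  assumes "rep c R f M" "rep c R g N"
  shows "rep c R (\<lambda>x. f x * g x) (M * N)"
proof -
  obtain d where d: "\<And>l. 0 < R$l" "okc R d" "nrm R d \<le> M" "\<And>x. inpoly c R x \<Longrightarrow> ((\<lambda>\<alpha>. d \<alpha> * mon c \<alpha> x) has_sum f x) UNIV"
    by (rule repE[OF assms(1)]) auto
  obtain e where e: "okc R e" "nrm R e \<le> N" "\<And>x. inpoly c R x \<Longrightarrow> ((\<lambda>\<alpha>. e \<alpha> * mon c \<alpha> x) has_sum g x) UNIV"
    by (rule repE[OF assms(2)]) auto
  have pw: "pw R \<alpha> > 0" for \<alpha> using pw_pos d(1) by blast
  define cv where "cv = (\<lambda>\<gamma>. \<Sum>p\<in>fib \<gamma>. d (fst p) * e (snd p))"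
  let ?G = "\<lambda>p. (\<bar>d (fst p)\<bar> * pw R (fst p)) * (\<bar>e (snd p)\<bar> * pw R (snd p))"
  have J: "((\<lambda>(\<alpha>,\<beta>). (\<bar>d \<alpha>\<bar> * pw R \<alpha>) * (\<bar>e \<beta>\<bar> * pw R \<beta>)) has_sum nrm R d * nrm R e) (UNIV \<times> UNIV)"
    by (rule prod_has_sum) (use okc_has_sum[OF d(2)] okc_has_sum[OF e(1)] d(2) e(1) pw
        in \<open>auto simp: okc_def abs_mult less_imp_le\<close>)
  have J2: "((\<lambda>\<gamma>. \<Sum>p\<in>fib \<gamma>. ?G p) has_sum nrm R d * nrm R e) UNIV"
    using regroup[of ?G] J by (simp add: case_prod_unfold)
  have le: "\<bar>cv \<gamma>\<bar> * pw R \<gamma> \<le> (\<Sum>p\<in>fib \<gamma>. ?G p)" for \<gamma>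
  proof -
    have "(\<Sum>p\<in>fib \<gamma>. ?G p) = (\<Sum>p\<in>fib \<gamma>. \<bar>d (fst p) * e (snd p)\<bar>) * pw R \<gamma>"
      unfolding sum_distrib_right
      by (intro sum.cong refl) (auto simp: abs_mult pw_fib[symmetric])
    moreover have "\<bar>cv \<gamma>\<bar> \<le> (\<Sum>p\<in>fib \<gamma>. \<bar>d (fst p) * e (snd p)\<bar>)"
      unfolding cv_def by (rule sum_abs)
    ultimately show ?thesis using pw[of \<gamma>] by (simp add: mult_right_mono)
  qed
  have ok: "okc R cv"
    unfolding okc_def
    by (rule summable_on_comparison_test[OF has_sum_imp_summable[OF J2] le])
       (simp add: less_imp_le pw)
  have "nrm R cv \<le> nrm R d * nrm R e"
    using has_sum_mono[OF okc_has_sum[OF ok] J2 le] by simp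
  also have "\<dots> \<le> M * N"
    using d(3) e(2) nrm_nonneg'[OF d(2) d(1)] nrm_nonneg'[OF e(1) d(1)]
    by (intro mult_mono) auto
  finally have n: "nrm R cv \<le> M * N" .
  show ?thesis
  proof (rule repI[OF d(1) ok n])
    fix x assume x: "inpoly c R x"
    let ?H = "\<lambda>p. (d (fst p) * mon c (fst p) x) * (e (snd p) * mon c (snd p) x)"
    have H: "((\<lambda>(\<alpha>,\<beta>). (d \<alpha> * mon c \<alpha> x) * (e \<beta> * mon c \<beta> x)) has_sum f x * g x) (UNIV \<times> UNIV)"
      by (rule prod_has_sum[OF d(4)[OF x] okc_eval_abs[OF d(2) x] e(3)[OF x] okc_eval_abs[OF e(1) x]])
    have H2: "((\<lambda>\<gamma>. \<Sum>p\<in>fib \<gamma>. ?H p) has_sum f x * g x) UNIV"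
      using regroup[of ?H] H by (simp add: case_prod_unfold)
    show "((\<lambda>\<gamma>. cv \<gamma> * mon c \<gamma> x) has_sum f x * g x) UNIV"
    proof (rule has_sum_cong[THEN iffD1, OF _ H2])
      fix \<gamma>
      show "(\<Sum>p\<in>fib \<gamma>. ?H p) = cv \<gamma> * mon c \<gamma> x"
        unfolding cv_def sum_distrib_right
        by (intro sum.cong refl) (auto simp: mon_fib[symmetric] mult_ac)
    qed
  qed
qed

lemma rep_power:
  assumes "rep c R f M"
  shows "rep c R (\<lambda>x. f x ^ k) (M ^ k)"
proof (induction k)
  case 0
  have "\<forall>l. 0 < R$l" using assms unfolding rep_def by blast
  then show ?case using rep_const[of R c 1] by simp
next
  case (Suc k)
  show ?case using rep_mult[OF assms Suc] by simp
qed

lemma rep_prod: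
  assumes "finite S" "\<And>l. 0 < R$l" "\<And>s. s \<in> S \<Longrightarrow> rep c R (f s) (M s)"
  shows "rep c R (\<lambda>x. \<Prod>s\<in>S. f s x) (\<Prod>s\<in>S. M s)"
  using assms(1,3)
proof (induction S rule: finite_induct)
  case empty
  then show ?case using rep_const[of R c 1] assms(2) by simp
next
  case (insert s S)
  have "rep c R (\<lambda>x. f s x * (\<Prod>s\<in>S. f s x)) (M s * (\<Prod>s\<in>S. M s))"
    by (rule rep_mult) (use insert in auto)
  then show ?case using insert by simp
qed



lemma rep_infsum:
  fixes g :: "'g \<Rightarrow> real^'m \<Rightarrow> real" and Mg :: "'g \<Rightarrow> real"
  assumes pos: "\<And>l. 0 < R$l" and reps: "\<And>\<gamma>. rep c R (g \<gamma>) (Mg \<gamma>)"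
    and summ: "Mg summable_on UNIV"
  shows "rep c R (\<lambda>x. infsum (\<lambda>\<gamma>. g \<gamma> x) UNIV) (infsum Mg UNIV)"
proof -
  have "\<forall>\<gamma>. \<exists>d. okc R d \<and> nrm R d \<le> Mg \<gamma> \<and>
      (\<forall>x. inpoly c R x \<longrightarrow> ((\<lambda>\<alpha>. d \<alpha> * mon c \<alpha> x) has_sum g \<gamma> x) UNIV)"
    using reps unfolding rep_def by blast
  then obtain D where D: "\<And>\<gamma>. okc R (D \<gamma>)" "\<And>\<gamma>. nrm R (D \<gamma>) \<le> Mg \<gamma>"
    "\<And>\<gamma> x. inpoly c R x \<Longrightarrow> ((\<lambda>\<alpha>. D \<gamma> \<alpha> * mon c \<alpha> x) has_sum g \<gamma> x) UNIV"
    by metis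
  have pw: "pw R \<alpha> > 0" for \<alpha> using pw_pos pos by blast
  have nn: "0 \<le> nrm R (D \<gamma>)" for \<gamma> using nrm_nonneg'[OF D(1) pos] .
  have nsum: "(\<lambda>\<gamma>. nrm R (D \<gamma>)) summable_on UNIV"
    by (rule summable_on_comparison_test[OF summ D(2) nn])
  let ?J = "\<lambda>p. \<bar>D (fst p) (snd p)\<bar> * pw R (snd p)"
  have Js: "?J summable_on (UNIV \<times> UNIV)"
  proof (rule summable_on_SigmaI)
    show "((\<lambda>y. ?J (\<gamma>, y)) has_sum nrm R (D \<gamma>)) UNIV" for \<gamma>
      using okc_has_sum[OF D(1)] by simp
  qed (use nsum pw in \<open>simp_all add: less_imp_le\<close>)
  let ?J' = "\<lambda>p. \<bar>D (snd p) (fst p)\<bar> * pw R (fst p)"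
  have Js': "?J' summable_on (UNIV \<times> UNIV)"
    using Js summable_on_swap[of ?J UNIV UNIV] by (simp add: case_prod_unfold)
  have inner: "(\<lambda>\<gamma>. \<bar>D \<gamma> \<alpha>\<bar> * pw R \<alpha>) summable_on UNIV" for \<alpha>
    using summable_on_SigmaD1[of "\<lambda>a b. ?J' (a, b)" UNIV "\<lambda>_. UNIV" \<alpha>] Js'
    by (simp add: case_prod_unfold)
  have inner2: "(\<lambda>\<gamma>. D \<gamma> \<alpha>) summable_on UNIV" for \<alpha>
  proof -
    have "(\<lambda>\<gamma>. (\<bar>D \<gamma> \<alpha>\<bar> * pw R \<alpha>) * inverse (pw R \<alpha>)) summable_on UNIV"
      using summable_on_cmult_left[OF inner] .
    moreover have "(\<bar>D \<gamma> \<alpha>\<bar> * pw R \<alpha>) * inverse (pw R \<alpha>) = norm (D \<gamma> \<alpha>)" for \<gamma>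
      using pw[of \<alpha>] by simp
    ultimately have "(\<lambda>\<gamma>. norm (D \<gamma> \<alpha>)) summable_on UNIV" by simp
    then show ?thesis by (rule abs_summable_summable)
  qed
  define E where "E = (\<lambda>\<alpha>. infsum (\<lambda>\<gamma>. D \<gamma> \<alpha>) UNIV)"
  define T where "T = (\<lambda>\<alpha>. infsum (\<lambda>\<gamma>. \<bar>D \<gamma> \<alpha>\<bar> * pw R \<alpha>) UNIV)"
  have Tsum: "T summable_on UNIV"
    unfolding T_def
    using summable_on_SigmaD[of ?J' UNIV "\<lambda>_. UNIV"] Js' inner by simp
  have le: "\<bar>E \<alpha>\<bar> * pw R \<alpha> \<le> T \<alpha>" for \<alpha>
  proof -
    have "\<bar>E \<alpha>\<bar> \<le> infsum (\<lambda>\<gamma>. norm (D \<gamma> \<alpha>)) UNIV"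
      unfolding E_def using norm_infsum_bound[of "\<lambda>\<gamma>. D \<gamma> \<alpha>" UNIV] inner2
      by (metis real_norm_def summable_on_iff_abs_summable_on_real)
    then have "\<bar>E \<alpha>\<bar> * pw R \<alpha> \<le> infsum (\<lambda>\<gamma>. \<bar>D \<gamma> \<alpha>\<bar>) UNIV * pw R \<alpha>"
      using pw[of \<alpha>] by (simp add: mult_right_mono)
    also have "\<dots> = T \<alpha>" unfolding T_def by (rule infsum_cmult_left'[symmetric])
    finally show ?thesis .
  qed
  have ok: "okc R E" unfolding okc_def
    by (rule summable_on_comparison_test[OF Tsum le]) (simp add: less_imp_le pw)
  have "nrm R E \<le> infsum T UNIV"
    unfolding nrm_def by (rule infsum_mono[OF _ Tsum le]) (use ok okc_def in blast)
  also have "infsum T UNIV = infsum (\<lambda>\<gamma>. nrm R (D \<gamma>)) UNIV"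
    unfolding T_def nrm_def
    by (rule infsum_swap_banach[symmetric]) (use Js in \<open>simp add: case_prod_unfold\<close>)
  also have "\<dots> \<le> infsum Mg UNIV" by (rule infsum_mono[OF nsum summ D(2)])
  finally have n: "nrm R E \<le> infsum Mg UNIV" .
  show ?thesis
  proof (rule repI[OF pos ok n])
    fix x assume x: "inpoly c R x"
    let ?K = "\<lambda>p. D (fst p) (snd p) * mon c (snd p) x"
    have Ks: "?K summable_on (UNIV \<times> UNIV)"
    proof -
      have "(\<lambda>p. norm (?K p)) summable_on (UNIV \<times> UNIV)"
      proof (rule summable_on_comparison_test[OF Js])
        fix p :: "'g \<times> ('m \<Rightarrow> nat)"
        show "norm (?K p) \<le> ?J p"
          by (simp add: abs_mult mult_left_mono abs_mono_le[OF x])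
      qed auto
      then show ?thesis by (rule abs_summable_summable)
    qed
    define S where "S = infsum ?K (UNIV \<times> UNIV)"
    have KS: "(?K has_sum S) (UNIV \<times> UNIV)" unfolding S_def using Ks by (rule has_sum_infsum)
    have g1: "((\<lambda>\<gamma>. g \<gamma> x) has_sum S) UNIV"
      by (rule has_sum_SigmaD[OF KS]) (use D(3)[OF x] in simp)
    have KS': "((\<lambda>p. ?K (snd p, fst p)) has_sum S) (UNIV \<times> UNIV)"
      using KS has_sum_swap[of ?K UNIV UNIV S] by (simp add: case_prod_unfold)
    have e1: "((\<lambda>\<alpha>. E \<alpha> * mon c \<alpha> x) has_sum S) UNIV"
    proof (rule has_sum_SigmaD[OF KS'])
      fix \<alpha> :: "'m \<Rightarrow> nat"
      show "((\<lambda>\<gamma>. ?K (snd (\<alpha>, \<gamma>), fst (\<alpha>, \<gamma>))) has_sum E \<alpha> * mon c \<alpha> x) UNIV"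
        using has_sum_cmult_left[OF has_sum_infsum[OF inner2[of \<alpha>]], of "mon c \<alpha> x"]
        unfolding E_def by simp
    qed
    have "infsum (\<lambda>\<gamma>. g \<gamma> x) UNIV = S" using g1 by (rule infsumI)
    then show "((\<lambda>\<alpha>. E \<alpha> * mon c \<alpha> x) has_sum infsum (\<lambda>\<gamma>. g \<gamma> x) UNIV) UNIV"
      using e1 by simp
  qed
qed

definition emb :: "'m \<Rightarrow> nat \<Rightarrow> ('m \<Rightarrow> nat)" where
  "emb l k = (\<lambda>l'. if l' = l then k else 0)"

lemma emb_same[simp]: "emb l k l = k"
  unfolding emb_def by simp

lemma inj_emb: "inj (emb l)"
  unfolding emb_def by (rule injI) (metis)

lemma prod_emb: "(\<Prod>l'\<in>(UNIV::'m::finite set). (a l') ^ (emb l k l')) = a l ^ k"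
proof -
  have "(\<Prod>l'\<in>(UNIV::'m set). (a l') ^ (emb l k l')) = (\<Prod>l'\<in>UNIV. if l' = l then a l ^ k else 1)"
    unfolding emb_def by (intro prod.cong) auto
  then show ?thesis by simp
qed

lemma has_sum_emb:
  fixes F :: "('m::finite \<Rightarrow> nat) \<Rightarrow> real"
  assumes "\<And>\<alpha>. \<alpha> \<notin> range (emb l) \<Longrightarrow> F \<alpha> = 0"
  shows "(F has_sum S) UNIV \<longleftrightarrow> ((\<lambda>k. F (emb l k)) has_sum S) UNIV"
proof -
  have "(F has_sum S) UNIV \<longleftrightarrow> (F has_sum S) (range (emb l))"
    by (rule has_sum_cong_neutral) (use assms in auto)
  also have "\<dots> \<longleftrightarrow> ((F \<circ> emb l) has_sum S) UNIV"
    by (rule has_sum_reindex[OF inj_emb])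
  finally show ?thesis by (simp add: o_def)
qed

lemma rep_1d:
  fixes l :: "'m::finite" and g :: "nat \<Rightarrow> real" and \<phi> :: "real^'m \<Rightarrow> real"
  assumes pos: "\<And>l. 0 < R$l" and summ: "summable (\<lambda>k. \<bar>g k\<bar> * (R$l)^k)"
    and ser: "\<And>x. inpoly c R x \<Longrightarrow> (\<lambda>k. g k * (x$l - c$l)^k) sums \<phi> x"
  shows "rep c R \<phi> (\<Sum>k. \<bar>g k\<bar> * (R$l)^k)"
proof -
  define d where "d = (\<lambda>\<alpha>. if \<alpha> \<in> range (emb l) then g (\<alpha> l) else 0)"
  have demb: "d (emb l k) = g k" for k unfolding d_def by (simp add: emb_def)
  have pwemb: "pw R (emb l k) = (R$l)^k" for k unfolding pw_def by (rule prod_emb)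
  have monemb: "mon c (emb l k) x = (x$l - c$l)^k" for k x unfolding mon_def by (rule prod_emb)
  have h1: "((\<lambda>k. \<bar>g k\<bar> * (R$l)^k) has_sum (\<Sum>k. \<bar>g k\<bar> * (R$l)^k)) UNIV"
    by (rule sums_nonneg_imp_has_sum[OF summable_sums[OF summ]]) (use pos in \<open>simp add: less_imp_le\<close>)
  have h2: "((\<lambda>\<alpha>. \<bar>d \<alpha>\<bar> * pw R \<alpha>) has_sum (\<Sum>k. \<bar>g k\<bar> * (R$l)^k)) UNIV"
    by (subst has_sum_emb[of l]) (use h1 in \<open>auto simp: d_def demb pwemb\<close>)
  show ?thesis
  proof (rule repI[OF pos])
    show ok: "okc R d" unfolding okc_def using h2 has_sum_imp_summable by blast
    show "nrm R d \<le> (\<Sum>k. \<bar>g k\<bar> * (R$l)^k)" unfolding nrm_def using h2 infsumI by fastforce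
    fix x assume x: "inpoly c R x"
    have xl: "\<bar>x$l - c$l\<bar> \<le> R$l" using x unfolding inpoly_def by (simp add: less_imp_le)
    have ns: "summable (\<lambda>k. norm (g k * (x$l - c$l)^k))"
    proof (rule summable_comparison_test'[OF summ])
      fix k
      show "norm (norm (g k * (x$l - c$l)^k)) \<le> \<bar>g k\<bar> * (R$l)^k"
        using xl by (simp add: abs_mult power_abs mult_left_mono power_mono)
    qed
    have "((\<lambda>k. g k * (x$l - c$l)^k) has_sum \<phi> x) UNIV"
      by (rule norm_summable_imp_has_sum[OF ns ser[OF x]])
    then show "((\<lambda>\<alpha>. d \<alpha> * mon c \<alpha> x) has_sum \<phi> x) UNIV"
      by (subst has_sum_emb[of l]) (auto simp: d_def demb monemb)
  qed
qed



definition shift :: "'m \<Rightarrow> ('m \<Rightarrow> nat) \<Rightarrow> ('m \<Rightarrow> nat)" where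
  "shift i \<beta> = \<beta>(i := Suc (\<beta> i))"

definition Dop :: "'m \<Rightarrow> (('m \<Rightarrow> nat) \<Rightarrow> real) \<Rightarrow> (('m \<Rightarrow> nat) \<Rightarrow> real)" where
  "Dop i d = (\<lambda>\<beta>. real (Suc (\<beta> i)) * d (shift i \<beta>))"

definition cls :: "real^'m \<Rightarrow> (('m \<Rightarrow> nat) \<Rightarrow> real) \<Rightarrow> bool" where
  "cls R d \<longleftrightarrow> (\<forall>R'. (\<forall>l. 0 \<le> R'$l \<and> R'$l < R$l) \<longrightarrow> okc R' d)"

definition psum :: "real^'m \<Rightarrow> (('m \<Rightarrow> nat) \<Rightarrow> real) \<Rightarrow> real^'m \<Rightarrow> real" where
  "psum c d x = infsum (\<lambda>\<alpha>. d \<alpha> * mon c \<alpha> x) UNIV"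

lemma geom_bound:
  fixes q :: real
  assumes "0 \<le> q" "q < 1"
  shows "real (Suc k) * q ^ k \<le> 1 / (1 - q)"
proof -
  have "real (Suc k) * q ^ k = (\<Sum>j<Suc k. q ^ k)" by simp
  also have "\<dots> \<le> (\<Sum>j<Suc k. q ^ j)"
    by (intro sum_mono power_decreasing) (use assms in auto)
  also have "\<dots> = (1 - q ^ Suc k) / (1 - q)" by (subst sum_gp_strict) (use assms in auto)
  also have "\<dots> \<le> 1 / (1 - q)" using assms by (intro divide_right_mono) auto
  finally show ?thesis .
qed

lemma prod_split:
  fixes f :: "'m::finite \<Rightarrow> real"
  shows "(\<Prod>l\<in>UNIV. f l) = f i * (\<Prod>l\<in>-{i}. f l)"
  using prod.remove[of UNIV i f] by (simp add: Compl_eq_Diff_UNIV)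

lemma shift_other[simp]: "l \<noteq> i \<Longrightarrow> shift i \<beta> l = \<beta> l"
  unfolding shift_def by auto

lemma shift_same[simp]: "shift i \<beta> i = Suc (\<beta> i)"
  unfolding shift_def by auto

lemma inj_shift: "inj (shift i)"
proof (rule injI)
  fix a b assume "shift i a = shift i b"
  then have "\<forall>l. shift i a l = shift i b l" by simp
  then show "a = b" by (metis ext shift_other shift_same Suc_inject)
qed

lemma range_shift: "range (shift i) = {\<alpha>. \<alpha> i \<noteq> 0}"
proof -
  have "\<alpha> \<in> range (shift i)" if "\<alpha> i \<noteq> 0" for \<alpha>
  proof -
    have "\<alpha> = shift i (\<alpha>(i := \<alpha> i - 1))" using that unfolding shift_def by auto
    then show ?thesis by blast
  qed
  then show ?thesis by auto
qed

lemma has_sum_shift: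
  fixes g :: "('m \<Rightarrow> nat) \<Rightarrow> real"
  assumes "\<And>\<alpha>. \<alpha> i = 0 \<Longrightarrow> g \<alpha> = 0"
  shows "(g has_sum S) UNIV \<longleftrightarrow> ((\<lambda>\<beta>. g (shift i \<beta>)) has_sum S) UNIV"
proof -
  have "(g has_sum S) UNIV \<longleftrightarrow> (g has_sum S) (range (shift i))"
    by (rule has_sum_cong_neutral) (use assms in \<open>auto simp: range_shift\<close>)
  also have "\<dots> \<longleftrightarrow> ((g \<circ> shift i) has_sum S) UNIV"
    by (rule has_sum_reindex[OF inj_shift])
  finally show ?thesis by (simp add: o_def)
qed

lemma pw_split: "pw R \<alpha> = (R$i) ^ (\<alpha> i) * (\<Prod>l\<in>-{i}. (R$l) ^ (\<alpha> l))"
  unfolding pw_def by (rule prod_split)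

lemma mon_split: "mon c \<alpha> x = (x$i - c$i) ^ (\<alpha> i) * (\<Prod>l\<in>-{i}. (x$l - c$l) ^ (\<alpha> l))"
  unfolding mon_def by (rule prod_split)

lemma prod_shift_other: "(\<Prod>l\<in>-{i}. (f l :: real) ^ (shift i \<beta> l)) = (\<Prod>l\<in>-{i}. f l ^ (\<beta> l))"
  by (intro prod.cong) auto

lemma okc_mono:
  assumes "okc R d" "\<And>l. 0 \<le> R'$l" "\<And>l. R'$l \<le> R$l"
  shows "okc R' d"
  unfolding okc_def
proof (rule summable_on_comparison_test[OF assms(1)[unfolded okc_def]])
  fix \<alpha>
  have "pw R' \<alpha> \<le> pw R \<alpha>" unfolding pw_def
    by (intro prod_mono conjI zero_le_power power_mono assms(2,3))
  then show "\<bar>d \<alpha>\<bar> * pw R' \<alpha> \<le> \<bar>d \<alpha>\<bar> * pw R \<alpha>" by (simp add: mult_left_mono)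
  show "0 \<le> \<bar>d \<alpha>\<bar> * pw R' \<alpha>" using pw_nonneg[of R' \<alpha>] assms(2) by simp
qed

lemma okc_cls: "okc R d \<Longrightarrow> (\<And>l. 0 < R$l) \<Longrightarrow> cls R d"
  unfolding cls_def using okc_mono by (metis less_imp_le)

lemma cls_Dop:
  assumes pos: "\<And>l. 0 < R$l" and cl: "cls R d"
  shows "cls R (Dop i d)"
  unfolding cls_def
proof (intro allI impI)
  fix R' :: "real^'a" assume R': "\<forall>l. 0 \<le> R'$l \<and> R'$l < R$l"
  define R2 where "R2 = (\<chi> l. (R'$l + R$l) / 2)"
  have R2: "R'$l < R2$l" "R2$l < R$l" "0 < R2$l" for l
    using R'[rule_format, of l] unfolding R2_def by auto
  have ok2: "okc R2 d" using cl R2 unfolding cls_def by (meson less_imp_le)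
  define q where "q = R'$i / R2$i"
  have q: "0 \<le> q" "q < 1" unfolding q_def using R'[rule_format, of i] R2[of i] by auto
  define C where "C = 1 / ((1 - q) * R2$i)"
  have C: "C > 0" unfolding C_def using q R2[of i] by simp
  let ?g = "\<lambda>\<alpha>. \<bar>d \<alpha>\<bar> * pw R2 \<alpha>"
  have s1: "(\<lambda>\<beta>. ?g (shift i \<beta>)) summable_on UNIV"
  proof -
    have "?g summable_on range (shift i)"
      using ok2 unfolding okc_def by (rule summable_on_subset) auto
    then show ?thesis using summable_on_reindex[OF inj_shift, of ?g i] by (simp add: o_def)
  qed
  have s2: "(\<lambda>\<beta>. C * ?g (shift i \<beta>)) summable_on UNIV"
    using summable_on_cmult_right[OF s1] .
  have le: "\<bar>Dop i d \<beta>\<bar> * pw R' \<beta> \<le> C * ?g (shift i \<beta>)" for \<beta>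
  proof -
    define P where "P = (\<Prod>l\<in>-{i}. (R'$l) ^ (\<beta> l))"
    define P2 where "P2 = (\<Prod>l\<in>-{i}. (R2$l) ^ (\<beta> l))"
    have P1: "0 \<le> P" unfolding P_def by (rule prod_nonneg) (use R' in auto)
    have P2: "P \<le> P2" unfolding P_def P2_def
    proof (rule prod_mono)
      fix l show "0 \<le> R'$l ^ \<beta> l \<and> R'$l ^ \<beta> l \<le> R2$l ^ \<beta> l"
        using R'[rule_format, of l] R2(1)[of l] by (auto intro: power_mono)
    qed
    note P = P1 P2
    have e1: "pw R' \<beta> = (R'$i) ^ (\<beta> i) * P" unfolding P_def by (rule pw_split)
    have e2: "pw R2 (shift i \<beta>) = (R2$i) ^ Suc (\<beta> i) * P2"
      unfolding P2_def pw_split[of R2 _ i] by (simp add: prod_shift_other)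
    have R'i: "R'$i = q * R2$i" unfolding q_def using R2[of i] by simp
    have "real (Suc (\<beta> i)) * (R'$i) ^ (\<beta> i) = (real (Suc (\<beta> i)) * q ^ (\<beta> i)) * (R2$i) ^ (\<beta> i)"
      unfolding R'i by (simp add: power_mult_distrib)
    also have "\<dots> \<le> (1 / (1 - q)) * (R2$i) ^ (\<beta> i)"
      by (intro mult_right_mono geom_bound q) (use R2[of i] in simp)
    also have "\<dots> = C * (R2$i) ^ Suc (\<beta> i)" unfolding C_def using R2[of i] q by simp
    finally have k: "real (Suc (\<beta> i)) * (R'$i) ^ (\<beta> i) \<le> C * (R2$i) ^ Suc (\<beta> i)" .
    have "\<bar>Dop i d \<beta>\<bar> * pw R' \<beta> = \<bar>d (shift i \<beta>)\<bar> * ((real (Suc (\<beta> i)) * (R'$i) ^ (\<beta> i)) * P)"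
      unfolding Dop_def e1 by (simp add: abs_mult mult_ac)
    also have "\<dots> \<le> \<bar>d (shift i \<beta>)\<bar> * ((C * (R2$i) ^ Suc (\<beta> i)) * P2)"
      by (intro mult_left_mono mult_mono k P) (use C R2[of i] in auto)
    also have "\<dots> = C * ?g (shift i \<beta>)" unfolding e2 by (simp add: mult_ac)
    finally show ?thesis .
  qed
  show "okc R' (Dop i d)" unfolding okc_def
    by (rule summable_on_comparison_test[OF s2 le])
       (use pw_nonneg[of R'] R' in \<open>auto intro!: mult_nonneg_nonneg\<close>)
qed

lemma cls_has_sum:
  assumes pos: "\<And>l. 0 < R$l" and cl: "cls R d" and x: "inpoly c R x"
  shows "((\<lambda>\<alpha>. d \<alpha> * mon c \<alpha> x) has_sum psum c d x) UNIV"
    and "okc (\<chi> l. (\<bar>x$l - c$l\<bar> + R$l) / 2) d"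
    and "inpoly c (\<chi> l. (\<bar>x$l - c$l\<bar> + R$l) / 2) x"
proof -
  define R' where "R' = (\<chi> l. (\<bar>x$l - c$l\<bar> + R$l) / 2)"
  have R': "0 \<le> R'$l" "R'$l < R$l" "\<bar>x$l - c$l\<bar> < R'$l" for l
    using x unfolding R'_def inpoly_def by (auto simp: less_imp_le) (smt (verit))
  show ok: "okc (\<chi> l. (\<bar>x$l - c$l\<bar> + R$l) / 2) d"
    using cl R' unfolding cls_def R'_def by blast
  show ip: "inpoly c (\<chi> l. (\<bar>x$l - c$l\<bar> + R$l) / 2) x"
    using R'(3) unfolding inpoly_def R'_def by blast
  show "((\<lambda>\<alpha>. d \<alpha> * mon c \<alpha> x) has_sum psum c d x) UNIV"
    unfolding psum_def by (rule has_sum_infsum[OF okc_eval_summable[OF ok ip]])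
qed



lemma kbound:
  fixes K R2 :: real
  assumes "0 < K" "K < R2"
  shows "real k * K ^ (Suc k - 2) \<le> (1 / (K * (1 - K / R2))) * R2 ^ k"
proof (cases k)
  case 0
  then show ?thesis using assms by (simp add: field_simps)
next
  case (Suc j)
  define q where "q = K / R2"
  have q: "0 \<le> q" "q < 1" unfolding q_def using assms by auto
  have Kq: "K = q * R2" unfolding q_def using assms by simp
  have "K * (real k * K ^ (Suc k - 2)) = real k * K ^ k" using Suc by simp
  also have "\<dots> \<le> real (Suc k) * K ^ k" using assms by (intro mult_right_mono) auto
  also have "\<dots> = (real (Suc k) * q ^ k) * R2 ^ k" unfolding Kq by (simp add: power_mult_distrib)
  also have "\<dots> \<le> (1 / (1 - q)) * R2 ^ k"
    by (intro mult_right_mono geom_bound q) (use assms in simp)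
  finally have "K * (real k * K ^ (Suc k - 2)) \<le> (1 / (1 - q)) * R2 ^ k" .
  then show ?thesis using assms q unfolding q_def[symmetric]
    by (simp add: field_simps)
qed

lemma deriv_psum:
  assumes pos: "\<And>l. 0 < R$l" and cl: "cls R d" and x: "inpoly c R x"
  shows "((\<lambda>s. psum c d (x + s *\<^sub>R axis i 1)) has_real_derivative psum c (Dop i d) x) (at 0)"
proof -
  let ?y = "\<lambda>h. x + h *\<^sub>R axis i 1"
  have yc: "?y h $ l = x$l + (if l = i then h else 0)" for h l by (simp add: axis_def)
  define u where "u = x$i - c$i"
  have u: "\<bar>u\<bar> < R$i" using x unfolding inpoly_def u_def by blast
  define K where "K = (\<bar>u\<bar> + R$i) / 2"
  define R2 where "R2 = (K + R$i) / 2"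
  have K: "\<bar>u\<bar> < K" "K < R2" "R2 < R$i" "0 < K"
    using u unfolding K_def R2_def by auto
  define Rt where "Rt = (\<chi> l. if l = i then R2 else \<bar>x$l - c$l\<bar>)"
  have Rt: "0 \<le> Rt$l \<and> Rt$l < R$l" for l
    using x K unfolding Rt_def inpoly_def by auto
  have okt: "okc Rt (Dop i d)" using cls_Dop[OF pos cl] Rt unfolding cls_def by blast
  define St where "St = nrm Rt (Dop i d)"
  define C where "C = 1 / (K * (1 - K / R2))"
  have C: "C > 0" unfolding C_def using K by (simp add: field_simps)
  define D where "D = psum c (Dop i d) x"
  define P where "P = (\<lambda>\<beta>::'a \<Rightarrow> nat. \<Prod>l\<in>-{i}. (x$l - c$l) ^ (\<beta> l))"
  have monx: "mon c \<beta> x = u ^ (\<beta> i) * P \<beta>" for \<beta>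
    unfolding mon_split[of c \<beta> x i] P_def u_def ..
  have mony: "mon c \<beta> (?y h) = (u + h) ^ (\<beta> i) * P \<beta>" for \<beta> h
    unfolding mon_split[of c \<beta> _ i] P_def u_def
    by (intro arg_cong2[where f="(*)"] prod.cong) (auto simp: axis_def algebra_simps)
  have Pshift: "P (shift i \<beta>) = P \<beta>" for \<beta> unfolding P_def by (rule prod_shift_other)
  have pwRt: "pw Rt \<beta> = R2 ^ (\<beta> i) * \<bar>P \<beta>\<bar>" for \<beta>
    unfolding pw_split[of Rt \<beta> i] P_def abs_prod power_abs
    by (intro arg_cong2[where f="(*)"] prod.cong) (auto simp: Rt_def)
  have main: "\<bar>(psum c d (?y h) - psum c d x) * inverse h - D\<bar> \<le> \<bar>h\<bar> * C * St"
    if h: "h \<noteq> 0" "\<bar>h\<bar> < K - \<bar>u\<bar>" for h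
  proof -
    have uh: "\<bar>u + h\<bar> \<le> K" using h by linarith
    have yin: "inpoly c R (?y h)"
      unfolding inpoly_def
    proof
      fix l show "\<bar>?y h $ l - c$l\<bar> < R$l"
      proof (cases "l = i")
        case True then show ?thesis using uh K by (simp add: yc u_def algebra_simps)
      next
        case False then show ?thesis using x by (simp add: axis_def inpoly_def)
      qed
    qed
    note F1 = cls_has_sum(1)[OF pos cl yin]
    note F2 = cls_has_sum(1)[OF pos cl x]
    have F12: "((\<lambda>\<alpha>. (d \<alpha> * mon c \<alpha> (?y h) - d \<alpha> * mon c \<alpha> x) * inverse h) has_sum
        ((psum c d (?y h) - psum c d x) * inverse h)) UNIV"
      by (intro has_sum_cmult_left has_sum_diff F1 F2)
    have F4: "((\<lambda>\<beta>. (d (shift i \<beta>) * mon c (shift i \<beta>) (?y h) - d (shift i \<beta>) * mon c (shift i \<beta>) x) * inverse h) has_sum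
        ((psum c d (?y h) - psum c d x) * inverse h)) UNIV"
      using has_sum_shift[of i "\<lambda>\<alpha>. (d \<alpha> * mon c \<alpha> (?y h) - d \<alpha> * mon c \<alpha> x) * inverse h"] F12
      by (simp add: monx mony)
    have F3: "((\<lambda>\<beta>. Dop i d \<beta> * mon c \<beta> x) has_sum D) UNIV"
      unfolding D_def by (rule cls_has_sum(1)[OF pos cls_Dop[OF pos cl] x])
    define E where "E = (\<lambda>\<beta>. (d (shift i \<beta>) * mon c (shift i \<beta>) (?y h) - d (shift i \<beta>) * mon c (shift i \<beta>) x) * inverse h
        - Dop i d \<beta> * mon c \<beta> x)"
    have FE: "(E has_sum ((psum c d (?y h) - psum c d x) * inverse h - D)) UNIV"
      unfolding E_def by (rule has_sum_diff[OF F4 F3])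
    have FB: "((\<lambda>\<beta>. \<bar>h\<bar> * C * (\<bar>Dop i d \<beta>\<bar> * pw Rt \<beta>)) has_sum (\<bar>h\<bar> * C * St)) UNIV"
      unfolding St_def by (rule has_sum_cmult_right[OF okc_has_sum[OF okt]])
    have EB: "\<bar>E \<beta>\<bar> \<le> \<bar>h\<bar> * C * (\<bar>Dop i d \<beta>\<bar> * pw Rt \<beta>)" for \<beta>
    proof -
      define k where "k = \<beta> i"
      define s where "s = shift i \<beta>"
      have Eeq: "E \<beta> = d s * P \<beta> * (((u + h) ^ Suc k - u ^ Suc k) / h - of_nat (Suc k) * u ^ k)"
        unfolding E_def Dop_def monx mony s_def[symmetric] k_def[symmetric]
        by (simp add: s_def Pshift k_def field_simps)
      have td: "\<bar>((u + h) ^ Suc k - u ^ Suc k) / h - of_nat (Suc k) * u ^ k\<bar>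
          \<le> of_nat (Suc k) * of_nat k * K ^ (Suc k - 2) * \<bar>h\<bar>"
        using lemma_termdiff3[of h u K "Suc k"] h(1) K(1) uh by simp
      have kb: "real k * K ^ (Suc k - 2) \<le> C * R2 ^ k"
        unfolding C_def using kbound[of K R2 k] K by simp
      have "\<bar>E \<beta>\<bar> \<le> \<bar>d s\<bar> * \<bar>P \<beta>\<bar> * (of_nat (Suc k) * of_nat k * K ^ (Suc k - 2) * \<bar>h\<bar>)"
        unfolding Eeq abs_mult by (intro mult_left_mono td) auto
      also have "\<dots> = \<bar>d s\<bar> * \<bar>P \<beta>\<bar> * of_nat (Suc k) * \<bar>h\<bar> * (real k * K ^ (Suc k - 2))"
        by (simp add: mult_ac)
      also have "\<dots> \<le> \<bar>d s\<bar> * \<bar>P \<beta>\<bar> * of_nat (Suc k) * \<bar>h\<bar> * (C * R2 ^ k)"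
        by (intro mult_left_mono kb) auto
      also have "\<dots> = \<bar>h\<bar> * C * (\<bar>Dop i d \<beta>\<bar> * pw Rt \<beta>)"
        unfolding pwRt Dop_def s_def k_def by (simp add: abs_mult mult_ac)
      finally show ?thesis .
    qed
    show ?thesis by (rule has_sum_abs_bound[OF FE FB EB])
  qed
  have lim: "((\<lambda>h. (psum c d (?y h) - psum c d (?y 0)) / (h - 0) - D) \<longlongrightarrow> 0) (at 0)"
  proof (rule Lim_null_comparison)
    show "\<forall>\<^sub>F h in at 0. norm ((psum c d (?y h) - psum c d (?y 0)) / (h - 0) - D) \<le> \<bar>h\<bar> * C * St"
      unfolding eventually_at
      by (rule exI[of _ "K - \<bar>u\<bar>"]) (use K main in \<open>auto simp: divide_inverse\<close>)
    have "((\<lambda>h::real. \<bar>h\<bar> * C * St) \<longlongrightarrow> \<bar>0\<bar> * C * St) (at 0)"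
      by (intro tendsto_intros)
    then show "((\<lambda>h::real. \<bar>h\<bar> * C * St) \<longlongrightarrow> 0) (at 0)" by simp
  qed
  show ?thesis unfolding has_field_derivative_iff D_def[symmetric]
    by (rule LIM_zero_cancel[OF lim])
qed



fun Dit :: "'m list \<Rightarrow> (('m \<Rightarrow> nat) \<Rightarrow> real) \<Rightarrow> (('m \<Rightarrow> nat) \<Rightarrow> real)" where
  "Dit [] d = d"
| "Dit (i # L) d = Dop i (Dit L d)"

lemma cls_Dit: "(\<And>l. 0 < R$l) \<Longrightarrow> cls R d \<Longrightarrow> cls R (Dit L d)"
  by (induction L) (auto intro: cls_Dop)

lemma ev_line:
  fixes x :: "real^'m"
  assumes "open V" "x \<in> V"
  shows "\<forall>\<^sub>F s in nhds 0. x + s *\<^sub>R axis i 1 \<in> V"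
proof -
  obtain e where e: "e > 0" "ball x e \<subseteq> V" using assms openE by blast
  show ?thesis unfolding eventually_nhds_metric
  proof (rule exI[of _ e], intro conjI allI impI)
    fix s :: real assume "dist s 0 < e"
    then have "dist x (x + s *\<^sub>R axis i 1) < e" by (simp add: dist_norm)
    then show "x + s *\<^sub>R axis i 1 \<in> V" using e by auto
  qed (use e in auto)
qed

lemma open_inpoly: "open {x. inpoly c R x}"
proof -
  have "{x. inpoly c R x} = (\<Inter>l\<in>UNIV. {x. \<bar>x$l - c$l\<bar> < R$l})"
    unfolding inpoly_def by auto
  also have "open \<dots>"
    by (intro open_INT ballI open_Collect_less continuous_intros) simp
  finally show ?thesis .
qed

lemma iter_local:
  assumes "open V" "\<And>y. y \<in> V \<Longrightarrow> g y = h y" "x \<in> V"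
  shows "iter_partial L g x = iter_partial L h x"
  using assms(3)
proof (induction L arbitrary: x)
  case Nil
  then show ?case using assms(2) by simp
next
  case (Cons i L)
  have "\<forall>\<^sub>F s in nhds 0. iter_partial L g (x + s *\<^sub>R axis i 1) = iter_partial L h (x + s *\<^sub>R axis i 1)"
    using ev_line[OF assms(1) Cons.prems, of i] by eventually_elim (rule Cons.IH)
  then show ?case unfolding iter_partial.simps partial_deriv_def
    by (rule deriv_cong_ev) simp
qed

lemma iter_psum:
  assumes pos: "\<And>l. 0 < R$l" and cl: "cls R d" and x: "inpoly c R x"
  shows "iter_partial L (psum c d) x = psum c (Dit L d) x"
  using x
proof (induction L arbitrary: x)
  case Nil
  then show ?case by simp
next
  case (Cons i L)
  have "\<forall>\<^sub>F s in nhds 0. iter_partial L (psum c d) (x + s *\<^sub>R axis i 1) = psum c (Dit L d) (x + s *\<^sub>R axis i 1)"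
    using ev_line[OF open_inpoly, of x c R i] Cons.prems by (auto elim!: eventually_mono intro: Cons.IH)
  then have "iter_partial (i # L) (psum c d) x = deriv (\<lambda>s. psum c (Dit L d) (x + s *\<^sub>R axis i 1)) 0"
    unfolding iter_partial.simps partial_deriv_def by (rule deriv_cong_ev) simp
  also have "\<dots> = psum c (Dop i (Dit L d)) x"
    by (rule DERIV_imp_deriv[OF deriv_psum[OF pos cls_Dit[OF pos cl] Cons.prems]])
  finally show ?case by simp
qed

lemma Dit_formula:
  fixes L :: "'m::finite list"
  shows "Dit L d \<beta> = (\<Prod>l\<in>UNIV. fact (\<beta> l + count_list L l) / fact (\<beta> l)) * d (\<lambda>l. \<beta> l + count_list L l)"
proof (induction L arbitrary: \<beta>)
  case Nil
  then show ?case by simp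
next
  case (Cons i L)
  let ?c = "\<lambda>l. count_list L l"
  let ?c' = "\<lambda>l. count_list (i # L) l"
  have c': "?c' l = (if l = i then Suc (?c l) else ?c l)" for l by auto
  have arg: "(\<lambda>l. shift i \<beta> l + ?c l) = (\<lambda>l. \<beta> l + ?c' l)"
    by (rule ext) (auto simp: c')
  have p1: "(\<Prod>l\<in>UNIV. fact (shift i \<beta> l + ?c l) / fact (shift i \<beta> l) :: real)
      = fact (Suc (\<beta> i) + ?c i) / fact (Suc (\<beta> i)) * (\<Prod>l\<in>-{i}. fact (\<beta> l + ?c l) / fact (\<beta> l))"
    by (subst prod_split[of _ i]) (auto intro!: prod.cong)
  have p2: "(\<Prod>l\<in>UNIV. fact (\<beta> l + ?c' l) / fact (\<beta> l) :: real)
      = fact (\<beta> i + Suc (?c i)) / fact (\<beta> i) * (\<Prod>l\<in>-{i}. fact (\<beta> l + ?c l) / fact (\<beta> l))"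
    by (subst prod_split[of _ i]) (auto intro!: prod.cong simp: c')
  have g: "\<And>a F g::real. a \<noteq> 0 \<Longrightarrow> a * (F / (a * g)) = F / g" by simp
  have e1: "Suc (\<beta> i) + ?c i = \<beta> i + Suc (?c i)" by simp
  have f: "real (Suc (\<beta> i)) * (fact (Suc (\<beta> i) + ?c i) / fact (Suc (\<beta> i))) = fact (\<beta> i + Suc (?c i)) / fact (\<beta> i)"
    unfolding e1 fact_Suc[of "\<beta> i"] by (rule g) simp
  show ?case
    unfolding Dit.simps Dop_def Cons.IH arg p1 p2
    using f by (simp add: mult_ac)
qed

lemma Dit_zero:
  fixes L :: "'m::finite list"
  shows "Dit L d (\<lambda>_. 0) = (\<Prod>l\<in>UNIV. fact (count_list L l)) * d (\<lambda>l. count_list L l)"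
  using Dit_formula[of L d "\<lambda>_. 0"] by simp

lemma psum_center: "psum c e c = e (\<lambda>_. 0)"
proof -
  have "((\<lambda>\<alpha>. e \<alpha> * mon c \<alpha> c) has_sum e (\<lambda>_. 0)) UNIV"
    by (rule has_sum_cong_neutral[where S="{\<lambda>_. 0}", THEN iffD1])
       (auto simp: mono_center intro!: has_sum_finiteI)
  then show ?thesis unfolding psum_def by (rule infsumI)
qed



lemma fact_mult_le: "fact a * fact b \<le> (fact (a + b) :: nat)"
proof -
  have "fact a * fact b * ((a + b) choose a) = fact (a + b)"
    using binomial_fact_lemma[of a "a + b"] by simp
  moreover have "(a + b) choose a \<ge> 1" by (simp add: Suc_leI)
  ultimately show ?thesis by (metis mult_le_mono2 nat_mult_1_right)
qed

lemma prod_fact_le: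
  assumes "finite S"
  shows "(\<Prod>s\<in>S. fact (f s)) \<le> (fact (\<Sum>s\<in>S. f s) :: nat)"
  using assms
proof (induction S rule: finite_induct)
  case (insert x S)
  have "(\<Prod>s\<in>insert x S. fact (f s)) = (fact (f x) * (\<Prod>s\<in>S. fact (f s)) :: nat)" using insert by simp
  also have "\<dots> \<le> fact (f x) * fact (\<Sum>s\<in>S. f s)" by (rule mult_le_mono2[OF insert.IH])
  also have "\<dots> \<le> fact (f x + (\<Sum>s\<in>S. f s))" by (rule fact_mult_le)
  finally show ?case using insert by simp
qed simp

lemma prod_fact_count_le:
  fixes L :: "'m::finite list"
  shows "(\<Prod>l\<in>UNIV. fact (count_list L l) :: real) \<le> fact (length L)"
proof -
  have "(\<Prod>l\<in>UNIV. fact (count_list L l)) \<le> (fact (\<Sum>l\<in>UNIV. count_list L l) :: nat)"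
    by (rule prod_fact_le) simp
  also have "(\<Sum>l\<in>UNIV. count_list L l) = length L" by (rule sum_count_set) auto
  finally have "real (\<Prod>l\<in>UNIV. fact (count_list L l)) \<le> real (fact (length L))"
    by (rule of_nat_mono)
  then show ?thesis by (simp add: of_nat_prod)
qed

lemma rep_deriv_bound:
  fixes L :: "'m::finite list"
  assumes "rep c R h M"
  shows "\<bar>iter_partial L h c\<bar> * pw R (\<lambda>l. count_list L l) \<le> fact (length L) * M"
proof -
  obtain d where d: "\<And>l. 0 < R$l" "okc R d" "nrm R d \<le> M"
    "\<And>x. inpoly c R x \<Longrightarrow> ((\<lambda>\<alpha>. d \<alpha> * mon c \<alpha> x) has_sum h x) UNIV"
    by (rule repE[OF assms]) auto
  let ?cnt = "\<lambda>l. count_list L l"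
  have cl: "cls R d" by (rule okc_cls[OF d(2) d(1)])
  have cin: "inpoly c R c" unfolding inpoly_def using d(1) by simp
  have eq: "h x = psum c d x" if "x \<in> {x. inpoly c R x}" for x
    unfolding psum_def using d(4) that by (metis infsumI mem_Collect_eq)
  have "iter_partial L h c = iter_partial L (psum c d) c"
    by (rule iter_local[OF open_inpoly eq]) (use cin in auto)
  also have "\<dots> = psum c (Dit L d) c" by (rule iter_psum[OF d(1) cl cin])
  also have "\<dots> = (\<Prod>l\<in>UNIV. fact (?cnt l)) * d ?cnt" by (simp add: psum_center Dit_zero)
  finally have it: "iter_partial L h c = (\<Prod>l\<in>UNIV. fact (?cnt l)) * d ?cnt" .
  have single: "\<bar>d ?cnt\<bar> * pw R ?cnt \<le> nrm R d"
    using finite_sum_le_has_sum[OF okc_has_sum[OF d(2)], of "{?cnt}"] d(1)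
    by (simp add: less_imp_le pw_nonneg)
  have pf: "0 \<le> (\<Prod>l\<in>UNIV. fact (?cnt l) :: real)" by (simp add: prod_nonneg)
  have "\<bar>iter_partial L h c\<bar> * pw R ?cnt = (\<Prod>l\<in>UNIV. fact (?cnt l)) * (\<bar>d ?cnt\<bar> * pw R ?cnt)"
    unfolding it abs_mult using pf by simp
  also have "\<dots> \<le> fact (length L) * M"
    using pw_pos[OF d(1), of ?cnt]
    by (intro mult_mono prod_fact_count_le) (use single d(3) pf in auto)
  finally show ?thesis .
qed

definition Sb :: "real \<Rightarrow> real \<Rightarrow> real" where
  "Sb a r = (\<Sum>n. \<bar>a gchoose n\<bar> * r ^ n)"

lemma Sb_summable:
  fixes a r :: real
  assumes "0 \<le> r" "r < 1"
  shows "summable (\<lambda>n. \<bar>a gchoose n\<bar> * r ^ n)"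
proof -
  have "conv_radius (\<lambda>n. a gchoose n) \<ge> 1"
    by (simp add: conv_radius_gchoose)
  then have "conv_radius (\<lambda>n. norm (a gchoose n)) \<ge> 1"
    by (simp only: conv_radius_norm)
  then have "ereal (norm r) < conv_radius (\<lambda>n. norm (a gchoose n))"
    using assms by (metis ereal_less(3) less_le_trans real_norm_def abs_of_nonneg)
  from summable_in_conv_radius[OF this] show ?thesis by simp
qed

lemma Sb_zero: "Sb a 0 = 1"
  unfolding Sb_def using powser_zero[of "\<lambda>n. \<bar>a gchoose n\<bar>"] by simp

lemma Sb_cont: "isCont (Sb a) 0"
proof -
  have "isCont (\<lambda>x. \<Sum>n. \<bar>a gchoose n\<bar> * x ^ n) 0"
    by (rule isCont_powser[OF Sb_summable[of "1/2"]]) auto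
  then show ?thesis unfolding Sb_def[abs_def] .
qed

lemma rep_binom:
  fixes x0 :: "real^'m" and r :: real
  assumes r: "0 < r" "r < 1" and x0: "\<And>l. 0 < x0$l"
  shows "rep x0 (r *\<^sub>R x0) (\<lambda>x. (x$l / x0$l) powr a) (Sb a r)"
proof -
  let ?R = "r *\<^sub>R x0"
  have pos: "0 < ?R$l'" for l' using r x0 by simp
  define g where "g = (\<lambda>k. (a gchoose k) / (x0$l) ^ k)"
  have gR: "\<bar>g k\<bar> * (?R$l) ^ k = \<bar>a gchoose k\<bar> * r ^ k" for k
    unfolding g_def using x0[of l] by (simp add: abs_mult power_mult_distrib field_simps)
  have "rep x0 ?R (\<lambda>x. (x$l / x0$l) powr a) (\<Sum>k. \<bar>g k\<bar> * (?R$l) ^ k)"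
  proof (rule rep_1d[OF pos])
    show "summable (\<lambda>k. \<bar>g k\<bar> * (?R$l) ^ k)" unfolding gR using Sb_summable r by simp
    fix x assume x: "inpoly x0 ?R x"
    define w where "w = (x$l - x0$l) / x0$l"
    have w: "\<bar>w\<bar> < 1"
    proof -
      have "\<bar>x$l - x0$l\<bar> < r * x0$l" using x unfolding inpoly_def by simp
      then show ?thesis unfolding w_def using x0[of l] r
        by (simp add: abs_div pos_divide_less_eq) (smt (verit) mult_le_cancel_right2)
    qed
    have "(\<lambda>n. (a gchoose n) * w ^ n) sums (1 + w) powr a" by (rule gen_binomial_real[OF w])
    moreover have "1 + w = x$l / x0$l" unfolding w_def using x0[of l] by (simp add: field_simps)
    moreover have "(a gchoose n) * w ^ n = g n * (x$l - x0$l) ^ n" for n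
      unfolding g_def w_def by (simp add: power_divide)
    ultimately show "(\<lambda>k. g k * (x$l - x0$l) ^ k) sums (x$l / x0$l) powr a" by simp
  qed
  then show ?thesis unfolding gR Sb_def .
qed



lemma local_estimate:
  fixes F :: "real^'n \<Rightarrow> real" and y \<beta> :: "real^'n" and cc :: "('n \<Rightarrow> nat) \<Rightarrow> real"
    and \<mu> :: "'n \<Rightarrow> real^'m" and x0 :: "real^'m"
  assumes rr: "0 < rr"
    and ser: "\<And>z. z \<in> ball y rr \<Longrightarrow> ((\<lambda>\<gamma>. cc \<gamma> * mon y \<gamma> z) has_sum F z) UNIV"
    and x0: "\<And>l. 0 < x0$l" and r: "0 < r" "r < 1"
    and bY: "norm (\<beta> - y) < rr / (4 * real CARD('n))"
    and Bd: "norm \<beta> \<le> Bd" "Bd * \<epsilon> \<le> rr / (4 * real CARD('n))"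
    and Sbb: "\<And>i. (\<Prod>l\<in>UNIV. Sb (\<mu> i $ l) r) \<le> 1 + \<epsilon>"
  shows "rep x0 (r *\<^sub>R x0)
     (\<lambda>x. \<beta>$j * ((\<Prod>l\<in>UNIV. (x$l / x0$l) powr (\<mu> j $ l)) *
        F (\<chi> i. \<beta>$i * (\<Prod>l\<in>UNIV. (x$l / x0$l) powr (\<mu> i $ l)))))
     (\<bar>\<beta>$j\<bar> * ((1 + \<epsilon>) * infsum (\<lambda>\<gamma>. \<bar>cc \<gamma>\<bar> * pw (\<chi> i. rr / (2 * real CARD('n))) \<gamma>) UNIV))"
proof -
  let ?R = "r *\<^sub>R x0"
  let ?n = "real CARD('n)"
  have n: "?n \<ge> 1" by (simp add: Suc_leI)
  define s where "s = rr / (2 * ?n)"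
  have s: "0 < s" "?n * s < rr" unfolding s_def using rr n by (auto simp: field_simps)
  define Q where "Q = (\<lambda>i x. \<Prod>l\<in>UNIV. (x$l / x0$l) powr (\<mu> i $ l))"
  have pos: "0 < ?R$l" for l using r x0[of l] by simp
  have Qrep: "rep x0 ?R (Q i) (\<Prod>l\<in>UNIV. Sb (\<mu> i $ l) r)" for i
    unfolding Q_def by (rule rep_prod) (use pos in \<open>auto intro: rep_binom r x0\<close>)
  have Q0: "Q i x0 = 1" for i unfolding Q_def using x0 by (simp add: less_imp_neq[symmetric])
  have urep: "rep x0 ?R (\<lambda>x. \<beta>$i * Q i x - y$i) s" for i
  proof -
    have "rep x0 ?R (\<lambda>x. (\<beta>$i - y$i) + \<beta>$i * (Q i x - Q i x0))
        (\<bar>\<beta>$i - y$i\<bar> + \<bar>\<beta>$i\<bar> * ((\<Prod>l\<in>UNIV. Sb (\<mu> i $ l) r) - \<bar>Q i x0\<bar>))"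
      by (intro rep_add rep_const rep_scale rep_center Qrep pos)
    then have "rep x0 ?R (\<lambda>x. (\<beta>$i - y$i) + \<beta>$i * (Q i x - 1))
        (\<bar>\<beta>$i - y$i\<bar> + \<bar>\<beta>$i\<bar> * ((\<Prod>l\<in>UNIV. Sb (\<mu> i $ l) r) - 1))"
      by (simp add: Q0)
    then have 1: "rep x0 ?R (\<lambda>x. \<beta>$i * Q i x - y$i)
        (\<bar>\<beta>$i - y$i\<bar> + \<bar>\<beta>$i\<bar> * ((\<Prod>l\<in>UNIV. Sb (\<mu> i $ l) r) - 1))"
      by (rule rep_cong) (simp add: algebra_simps)
    have a: "\<bar>\<beta>$i - y$i\<bar> < rr / (4 * ?n)"
      using component_le_norm_cart[of "\<beta> - y" i] bY by simp
    have b: "\<bar>\<beta>$i\<bar> * ((\<Prod>l\<in>UNIV. Sb (\<mu> i $ l) r) - 1) \<le> \<bar>\<beta>$i\<bar> * \<epsilon>"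
      using Sbb[of i] by (intro mult_left_mono) auto
    have c: "\<bar>\<beta>$i\<bar> * \<epsilon> \<le> rr / (4 * ?n)"
    proof (cases "\<epsilon> \<ge> 0")
      case True
      then have "\<bar>\<beta>$i\<bar> * \<epsilon> \<le> Bd * \<epsilon>"
        using component_le_norm_cart[of \<beta> i] Bd(1) by (intro mult_right_mono) auto
      then show ?thesis using Bd(2) by linarith
    next
      case False
      then have "\<bar>\<beta>$i\<bar> * \<epsilon> \<le> 0" by (simp add: mult_nonneg_nonpos)
      moreover have "0 \<le> rr / (4 * ?n)" using rr by simp
      ultimately show ?thesis by linarith
    qed
    have "rr / (4 * ?n) + rr / (4 * ?n) = s" unfolding s_def by (simp add: field_simps)
    then show ?thesis using 1 a b c by (elim rep_mono) linarith
  qed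
  define sv where "sv = (\<chi> i::'n. s)"
  have pws: "(\<Prod>i\<in>UNIV. s ^ (\<gamma> i)) = pw sv \<gamma>" for \<gamma> unfolding pw_def sv_def by simp
  have trep: "rep x0 ?R (\<lambda>x. cc \<gamma> * (\<Prod>i\<in>UNIV. (\<beta>$i * Q i x - y$i) ^ (\<gamma> i))) (\<bar>cc \<gamma>\<bar> * pw sv \<gamma>)" for \<gamma>
    unfolding pws[symmetric] by (intro rep_scale rep_prod rep_power urep pos) auto
  have nsv: "norm sv \<le> ?n * s"
    using norm_le_l1_cart[of sv] s(1) unfolding sv_def by simp
  have z0: "y + sv \<in> ball y rr" using nsv s by (simp add: dist_norm)
  have hs0: "((\<lambda>\<gamma>. cc \<gamma> * pw sv \<gamma>) has_sum F (y + sv)) UNIV"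
  proof -
    have "mon y \<gamma> (y + sv) = pw sv \<gamma>" for \<gamma> unfolding mon_def pw_def by simp
    then show ?thesis using ser[OF z0] by simp
  qed
  have summ: "(\<lambda>\<gamma>. \<bar>cc \<gamma>\<bar> * pw sv \<gamma>) summable_on UNIV"
  proof -
    have "(\<lambda>\<gamma>. norm (cc \<gamma> * pw sv \<gamma>)) summable_on UNIV"
      using summable_on_iff_abs_summable_on_real[THEN iffD1, OF has_sum_imp_summable[OF hs0]] .
    moreover have "norm (cc \<gamma> * pw sv \<gamma>) = \<bar>cc \<gamma>\<bar> * pw sv \<gamma>" for \<gamma>
      using pw_nonneg[of sv \<gamma>] s(1) unfolding sv_def by (simp add: abs_mult)
    ultimately show ?thesis by simp
  qed
  define Mf where "Mf = infsum (\<lambda>\<gamma>. \<bar>cc \<gamma>\<bar> * pw sv \<gamma>) UNIV"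
  have Mf0: "0 \<le> Mf" unfolding Mf_def
    by (intro infsum_nonneg mult_nonneg_nonneg pw_nonneg) (use s(1) in \<open>auto simp: sv_def\<close>)
  have Frep0: "rep x0 ?R (\<lambda>x. infsum (\<lambda>\<gamma>. cc \<gamma> * (\<Prod>i\<in>UNIV. (\<beta>$i * Q i x - y$i) ^ (\<gamma> i))) UNIV) Mf"
    unfolding Mf_def by (rule rep_infsum[OF pos trep summ])
  have Frep: "rep x0 ?R (\<lambda>x. F (\<chi> i. \<beta>$i * Q i x)) Mf"
  proof (rule rep_cong[OF Frep0])
    fix x assume x: "inpoly x0 ?R x"
    let ?z = "(\<chi> i. \<beta>$i * Q i x) :: real^'n"
    have "norm (y - ?z) \<le> (\<Sum>i\<in>UNIV. \<bar>(y - ?z)$i\<bar>)" by (rule norm_le_l1_cart)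
    also have "\<dots> \<le> (\<Sum>i\<in>(UNIV::'n set). s)"
    proof (rule sum_mono)
      fix i show "\<bar>(y - ?z)$i\<bar> \<le> s"
        using rep_eval_bound[OF urep[of i] x] by (simp add: abs_minus_commute)
    qed
    also have "\<dots> = ?n * s" by simp
    finally have "?z \<in> ball y rr" using s by (simp add: dist_norm)
    from ser[OF this] have "((\<lambda>\<gamma>. cc \<gamma> * (\<Prod>i\<in>UNIV. (\<beta>$i * Q i x - y$i) ^ (\<gamma> i))) has_sum F ?z) UNIV"
      unfolding mon_def by simp
    then show "infsum (\<lambda>\<gamma>. cc \<gamma> * (\<Prod>i\<in>UNIV. (\<beta>$i * Q i x - y$i) ^ (\<gamma> i))) UNIV = F ?z"
      by (rule infsumI)
  qed
  have "rep x0 ?R (\<lambda>x. \<beta>$j * (Q j x * F (\<chi> i. \<beta>$i * Q i x))) (\<bar>\<beta>$j\<bar> * ((\<Prod>l\<in>UNIV. Sb (\<mu> j $ l) r) * Mf))"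
    by (intro rep_scale rep_mult Qrep Frep)
  then have "rep x0 ?R (\<lambda>x. \<beta>$j * (Q j x * F (\<chi> i. \<beta>$i * Q i x))) (\<bar>\<beta>$j\<bar> * ((1 + \<epsilon>) * Mf))"
    by (rule rep_mono) (intro mult_left_mono mult_right_mono Sbb Mf0; simp)
  then show ?thesis unfolding Q_def Mf_def sv_def s_def .
qed



lemma monom_ratio:
  assumes "\<And>l. 0 < x$l"
  shows "monom_pow x' m = monom_pow x m * (\<Prod>l\<in>UNIV. (x'$l / x$l) powr (m$l))"
proof -
  have "x'$l powr (m$l) = x$l powr (m$l) * (x'$l / x$l) powr (m$l)" for l
  proof -
    have "x'$l = x$l * (x'$l / x$l)" using assms[of l] by simp
    then show ?thesis by (metis powr_mult)
  qed
  then show ?thesis unfolding monom_pow_def by (simp add: prod.distrib)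
qed

lemma abstract_eq: "0 < q \<Longrightarrow> 0 < p \<Longrightarrow> f * X / (q * p) = inverse p * (X :: real) * (1 / q) * f"
  by (simp add: field_simps)

theorem lemma3p4:
  fixes T :: "(real^'k) set"
    and U :: "((real^'k) \<times> (real^'m)) set"
    and f :: "real^'k \<Rightarrow> real^'m \<Rightarrow> real"
    and b :: "real^'k \<Rightarrow> real^'m \<Rightarrow> real^'n"
    and j :: 'n
    and F :: "real^'n \<Rightarrow> real"
  assumes U_sub: "U \<subseteq> T \<times> {x. \<forall>l. 0 < x$l \<and> x$l < 1}"
    and fibres_open: "\<forall>t\<in>T. open {x. (t,x) \<in> U}"
    and b_mon: "bounded_monomial_map U b"
    and prepared: "\<forall>(t,x)\<in>U. f t x = b t x $ j * F (b t x)"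
    and F_an: "\<exists>W. open W \<and> closure ((\<lambda>(t,x). b t x) ` U) \<subseteq> W \<and>
                  real_analytic_on F W \<and> (\<forall>y\<in>W. F y \<noteq> 0)"
  shows "\<exists>A B. A > 0 \<and> B > 0 \<and>
           (\<forall>L t x. t \<in> T \<longrightarrow> (t,x) \<in> U \<longrightarrow>
              \<bar>iter_partial L (f t) x\<bar> \<le>
                (\<Prod>l\<in>UNIV. inverse ((x$l) ^ count_list L l)) * \<bar>b t x $ j\<bar>
                * B * A ^ length L * fact (length L))"
proof -
  let ?img = "(\<lambda>(t,x). b t x) ` U"
  let ?n = "real CARD('n)"
  have n: "?n \<ge> 1" by (simp add: Suc_leI)
  have "\<forall>i. \<exists>a \<mu>. \<forall>(t,x)\<in>U. b t x $ i = a t * monom_pow x \<mu>"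
    using b_mon unfolding bounded_monomial_map_def by blast
  then obtain a where "\<forall>i. \<exists>\<mu>. \<forall>(t,x)\<in>U. b t x $ i = a i t * monom_pow x \<mu>"
    using choice[of "\<lambda>i a. \<exists>\<mu>. \<forall>(t,x)\<in>U. b t x $ i = a t * monom_pow x \<mu>"] by blast
  then obtain \<mu> where "\<forall>i. \<forall>(t,x)\<in>U. b t x $ i = a i t * monom_pow x (\<mu> i)"
    using choice[of "\<lambda>i \<mu>. \<forall>(t,x)\<in>U. b t x $ i = a i t * monom_pow x \<mu>"] by blast
  then have a\<mu>: "\<And>i t x. (t,x) \<in> U \<Longrightarrow> b t x $ i = a i t * monom_pow x (\<mu> i)" by blast
  have "bounded ?img" using b_mon unfolding bounded_monomial_map_def by blast
  then obtain Bd where Bd: "Bd > 0" "\<And>z. z \<in> ?img \<Longrightarrow> norm z \<le> Bd"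
    unfolding bounded_pos by blast
  obtain W where W: "open W" "closure ?img \<subseteq> W" "real_analytic_on F W" using F_an by blast
  have "\<forall>y\<in>W. \<exists>r>0. \<exists>cf :: ('n \<Rightarrow> nat) \<Rightarrow> real. \<forall>z\<in>ball y r. ((\<lambda>\<alpha>. cf \<alpha> * mon y \<alpha> z) has_sum F z) UNIV"
    using W(3) unfolding real_analytic_on_def mon_def by blast
  then have "\<forall>y. \<exists>r. y \<in> W \<longrightarrow> r > 0 \<and> (\<exists>cf :: ('n \<Rightarrow> nat) \<Rightarrow> real. \<forall>z\<in>ball y r. ((\<lambda>\<alpha>. cf \<alpha> * mon y \<alpha> z) has_sum F z) UNIV)"
    by blast
  then obtain rr where "\<forall>y. y \<in> W \<longrightarrow> rr y > 0 \<and> (\<exists>cf :: ('n \<Rightarrow> nat) \<Rightarrow> real. \<forall>z\<in>ball y (rr y). ((\<lambda>\<alpha>. cf \<alpha> * mon y \<alpha> z) has_sum F z) UNIV)"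
    by (rule choice[THEN exE]) blast
  then have "\<forall>y. \<exists>cf :: ('n \<Rightarrow> nat) \<Rightarrow> real. y \<in> W \<longrightarrow> rr y > 0 \<and> (\<forall>z\<in>ball y (rr y). ((\<lambda>\<alpha>. cf \<alpha> * mon y \<alpha> z) has_sum F z) UNIV)"
    by blast
  then obtain cc where "\<forall>y. y \<in> W \<longrightarrow> rr y > 0 \<and> (\<forall>z\<in>ball y (rr y). ((\<lambda>\<alpha>. cc y \<alpha> * mon y \<alpha> z) has_sum F z) UNIV)"
    by (rule choice[THEN exE]) blast
  then have rc: "\<And>y. y \<in> W \<Longrightarrow> rr y > 0"
    "\<And>y z. y \<in> W \<Longrightarrow> z \<in> ball y (rr y) \<Longrightarrow> ((\<lambda>\<alpha>. cc y \<alpha> * mon y \<alpha> z) has_sum F z) UNIV"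
    by blast+
  define Ks where "Ks = closure ?img"
  have cK: "compact Ks" unfolding Ks_def using \<open>bounded ?img\<close> by simp
  have KW: "Ks \<subseteq> W" using W(2) unfolding Ks_def .
  have "Ks \<subseteq> (\<Union>y\<in>Ks. ball y (rr y / (4 * ?n)))"
  proof
    fix y assume "y \<in> Ks"
    then have "0 < rr y / (4 * ?n)" using rc(1) KW n by auto
    then show "y \<in> (\<Union>y\<in>Ks. ball y (rr y / (4 * ?n)))" by (intro UN_I[OF \<open>y \<in> Ks\<close>]) simp
  qed
  then obtain Y where Y: "Y \<subseteq> Ks" "finite Y" "Ks \<subseteq> (\<Union>y\<in>Y. ball y (rr y / (4 * ?n)))"
    using compactE_image[OF cK, of Ks "\<lambda>y. ball y (rr y / (4 * ?n))"] by auto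
  define Mf where "Mf = (\<lambda>y. infsum (\<lambda>\<gamma>. \<bar>cc y \<gamma>\<bar> * pw (\<chi> i. rr y / (2 * ?n)) \<gamma>) UNIV)"
  define \<epsilon> where "\<epsilon> = Min (insert 1 ((\<lambda>y. rr y / (4 * ?n * (Bd + 1))) ` Y))"
  have \<epsilon>: "0 < \<epsilon>" "\<epsilon> \<le> 1" "\<And>y. y \<in> Y \<Longrightarrow> Bd * \<epsilon> \<le> rr y / (4 * ?n)"
  proof -
    show "0 < \<epsilon>" unfolding \<epsilon>_def using Y rc(1) KW n Bd by (auto simp: Min_gr_iff)
    show "\<epsilon> \<le> 1" unfolding \<epsilon>_def using Y by simp
    fix y assume y: "y \<in> Y"
    have "\<epsilon> \<le> rr y / (4 * ?n * (Bd + 1))" unfolding \<epsilon>_def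
      by (rule Min_le) (use Y y in auto)
    moreover have "0 < 4 * ?n * (Bd + 1)" "0 < 4 * ?n" using n Bd by auto
    ultimately have e1: "\<epsilon> * (4 * ?n * (Bd + 1)) \<le> rr y" by (simp add: pos_le_divide_eq)
    have eq: "((Bd + 1) * \<epsilon>) * (4 * ?n) = \<epsilon> * (4 * ?n * (Bd + 1))" by (simp only: mult_ac)
    have "((Bd + 1) * \<epsilon>) * (4 * ?n) \<le> rr y" unfolding eq by (rule e1)
    then have "(Bd + 1) * \<epsilon> \<le> rr y / (4 * ?n)" using \<open>0 < 4 * ?n\<close> by (simp add: pos_le_divide_eq)
    moreover have "Bd * \<epsilon> \<le> (Bd + 1) * \<epsilon>" using \<open>0 < \<epsilon>\<close> by simp
    ultimately show "Bd * \<epsilon> \<le> rr y / (4 * ?n)" by linarith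
  qed
  define Mb where "Mb = Max (insert 1 (Mf ` Y))"
  have Mb: "1 \<le> Mb" "\<And>y. y \<in> Y \<Longrightarrow> Mf y \<le> Mb" unfolding Mb_def using Y by auto
  have ev: "\<forall>\<^sub>F \<rho> in at (0::real). \<forall>i. (\<Prod>l\<in>UNIV. Sb (\<mu> i $ l) \<rho>) < 1 + \<epsilon>"
  proof (rule eventually_all_finite)
    fix i
    have "isCont (\<lambda>\<rho>. \<Prod>l\<in>UNIV. Sb (\<mu> i $ l) \<rho>) 0"
      by (intro continuous_prod Sb_cont)
    then have "((\<lambda>\<rho>. \<Prod>l\<in>UNIV. Sb (\<mu> i $ l) \<rho>) \<longlongrightarrow> 1) (at 0)"
      unfolding isCont_def by (simp add: Sb_zero)
    then show "\<forall>\<^sub>F \<rho> in at 0. (\<Prod>l\<in>UNIV. Sb (\<mu> i $ l) \<rho>) < 1 + \<epsilon>"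
      using \<epsilon>(1) by (intro order_tendstoD) auto
  qed
  then obtain \<delta> where \<delta>: "\<delta> > 0" "\<And>\<rho>. \<rho> \<noteq> 0 \<Longrightarrow> dist \<rho> 0 < \<delta> \<Longrightarrow> \<forall>i. (\<Prod>l\<in>UNIV. Sb (\<mu> i $ l) \<rho>) < 1 + \<epsilon>"
    unfolding eventually_at by auto
  define r where "r = min (\<delta> / 2) (1 / 2)"
  have r: "0 < r" "r < 1" using \<delta> unfolding r_def by auto
  have Sbb: "(\<Prod>l\<in>UNIV. Sb (\<mu> i $ l) r) \<le> 1 + \<epsilon>" for i
    using \<delta>(2)[of r] r \<delta>(1) unfolding r_def by (auto simp: less_imp_le)
  show ?thesis
  proof (intro exI conjI allI impI)
    show "1 / r > 0" using r by simp
    show "2 * Mb > 0" using Mb by simp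
    fix L t x assume t: "t \<in> T" and tx: "(t, x) \<in> U"
    have x: "0 < x$l" "x$l < 1" for l using U_sub tx by auto
    define \<beta> where "\<beta> = b t x"
    have \<beta>img: "\<beta> \<in> ?img" unfolding \<beta>_def using tx by force
    then have "\<beta> \<in> Ks" unfolding Ks_def by (rule subsetD[OF closure_subset])
    then obtain y where y: "y \<in> Y" "\<beta> \<in> ball y (rr y / (4 * ?n))" using Y(3) by blast
    have yW: "y \<in> W" using y Y KW by blast
    have by': "norm (\<beta> - y) < rr y / (4 * ?n)" using y(2) by (simp add: dist_norm norm_minus_commute)
    define Q where "Q = (\<lambda>i x'. \<Prod>l\<in>UNIV. (x'$l / x$l) powr (\<mu> i $ l))"
    define H where "H = (\<lambda>x'. \<beta>$j * (Q j x' * F (\<chi> i. \<beta>$i * Q i x')))"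
    have rep1: "rep x (r *\<^sub>R x) H (\<bar>\<beta>$j\<bar> * ((1 + \<epsilon>) * Mf y))"
      unfolding H_def Q_def Mf_def
      by (rule local_estimate[OF rc(1)[OF yW] rc(2)[OF yW] x(1) r by' Bd(2)[OF \<beta>img] \<epsilon>(3)[OF y(1)] Sbb])
    have Mf0: "0 \<le> Mf y" unfolding Mf_def
      by (intro infsum_nonneg mult_nonneg_nonneg pw_nonneg) (use rc(1)[OF yW] in auto)
    have "(1 + \<epsilon>) * Mf y \<le> 2 * Mb"
      using \<epsilon>(2) Mb(2)[OF y(1)] Mf0 by (intro mult_mono) auto
    then have rep2: "rep x (r *\<^sub>R x) H (\<bar>\<beta>$j\<bar> * (2 * Mb))"
      by (intro rep_mono[OF rep1] mult_left_mono) auto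
    have db: "\<bar>iter_partial L H x\<bar> * pw (r *\<^sub>R x) (\<lambda>l. count_list L l) \<le> fact (length L) * (\<bar>\<beta>$j\<bar> * (2 * Mb))"
      by (rule rep_deriv_bound[OF rep2])
    have loc: "iter_partial L (f t) x = iter_partial L H x"
    proof (rule iter_local)
      show "open {x'. (t, x') \<in> U}" using fibres_open t by blast
      show "x \<in> {x'. (t, x') \<in> U}" using tx by simp
      fix x' assume "x' \<in> {x'. (t, x') \<in> U}"
      then have tx': "(t, x') \<in> U" by simp
      have bi: "b t x' $ i = \<beta>$i * Q i x'" for i
        unfolding \<beta>_def Q_def a\<mu>[OF tx'] a\<mu>[OF tx] monom_ratio[of x x' "\<mu> i", OF x(1)]
        by simp
      have "b t x' = (\<chi> i. \<beta>$i * Q i x')" by (simp add: vec_eq_iff bi)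
      then show "f t x' = H x'" using prepared tx' unfolding H_def by (auto simp: bi)
    qed
    define P where "P = (\<Prod>l\<in>UNIV. x$l ^ count_list L l)"
    have P: "0 < P" unfolding P_def using x by (intro prod_pos) auto
    have pwe: "pw (r *\<^sub>R x) (\<lambda>l. count_list L l) = r ^ length L * P"
    proof -
      have "pw (r *\<^sub>R x) (\<lambda>l. count_list L l) = (\<Prod>l\<in>UNIV. r ^ count_list L l) * P"
        unfolding pw_def P_def by (simp add: power_mult_distrib prod.distrib)
      also have "(\<Prod>l\<in>UNIV. r ^ count_list L l) = r ^ (\<Sum>l\<in>UNIV. count_list L l)"
        by (rule power_sum[symmetric])
      also have "(\<Sum>l\<in>UNIV. count_list L l) = length L" by (rule sum_count_set) auto
      finally show ?thesis .
    qed
    have rP: "0 < r ^ length L * P" using r P by simp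
    have "\<bar>iter_partial L (f t) x\<bar> \<le> fact (length L) * (\<bar>\<beta>$j\<bar> * (2 * Mb)) / (r ^ length L * P)"
      using db rP unfolding loc pwe by (simp add: pos_le_divide_eq)
    also have "\<dots> = (\<Prod>l\<in>UNIV. inverse ((x$l) ^ count_list L l)) * \<bar>b t x $ j\<bar> * (2 * Mb) * (1 / r) ^ length L * fact (length L)"
    proof -
      have "(\<Prod>l\<in>UNIV. inverse ((x$l) ^ count_list L l)) = inverse P"
        unfolding P_def using prod_inversef[of "\<lambda>l. x$l ^ count_list L l" UNIV] by (simp add: o_def)
      then show ?thesis unfolding \<beta>_def power_one_over
        using abstract_eq[of "r ^ length L" P "fact (length L)" "\<bar>b t x $ j\<bar> * (2 * Mb)"] P r
        by (simp add: mult.assoc)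
    qed
    finally show "\<bar>iter_partial L (f t) x\<bar> \<le> (\<Prod>l\<in>UNIV. inverse ((x$l) ^ count_list L l)) * \<bar>b t x $ j\<bar> * (2 * Mb) * (1 / r) ^ length L * fact (length L)" .
  qed
qed

end
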